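(* Assume $\beta<1-1/\gamma$ and let $\alpha=\gamma-\frac1{1-\beta}>0$. There exists $\delta>0$ such that $$\lim_{N\to\infty}\mathbb P\Big(\#\{k\in K^N:\ w_k\ge N^{-(\alpha+\delta)}\}=0\Big)=1.$$
   Context: Fix $\gamma>1$, $\beta\in(0,1)$. $\Xi$ is a Poisson point process on $(0,\infty)$ with intensity $x^{-2}dx$ and atoms $w_1>w_2>\cdots$. Conditionally on $\Xi$, $J^N=(J^N_1,\dots,J^N_N)$ are $N$ i.i.d. indices in $\{1,\dots,\lceil N^\gamma\rceil\}$ with $\mathbb P(J^N_k=i\mid\Xi)=w_i^\beta/\sum_{j=1}^{\lceil N^\gamma\rceil}w_j^\beta$. Let $\#J^N$ be the number of distinct values among $J^N_1,\dots,J^N_N$ and $r^N=N-\#J^N$. Given $\Xi$ and $J^N$, $K^N$ is a set of $r^N$ indices sampled without replacement from $\{1,\dots,\lceil N^\gamma\rceil\}\setminus\{J^N_1,\dots,J^N_N\}$ with weights $w_i^\beta$ (each successive draw picks a not-yet-drawn eligible index $i$ with probability proportional to $w_i^\beta$ among the not-yet-drawn eligible ones). *)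

theory Defs
  imports "HOL-Probability.Probability"
begin

definition ppp_intensity :: "real measure" where
  "ppp_intensity = density lborel (\<lambda>x. if 0 < x then ennreal (1 / x ^ 2) else 0)"

definition atom_count :: "(nat \<Rightarrow> real) \<Rightarrow> real set \<Rightarrow> nat" where
  "atom_count v A = card {i. v i \<in> A}"

text \<open>w is the decreasingly ordered sequence of atoms w 0 > w 1 > ... (paper: w_1 > w_2 > ...)
  of a Poisson point process on (0,infinity) with intensity x^(-2) dx, defined on the
  probability space M: almost surely the atoms are positive and strictly decreasing;
  the counts of atoms in Borel sets of finite intensity are a.s. finite and Poisson
  distributed with parameter the intensity of the set; counts in finitely many pairwise
  disjoint such sets are independent.\<close>
definition poisson_atoms :: "'a measure \<Rightarrow> ('a \<Rightarrow> nat \<Rightarrow> real) \<Rightarrow> bool" where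
  "poisson_atoms M w \<longleftrightarrow>
     prob_space M \<and>
     (\<forall>i. (\<lambda>\<omega>. w \<omega> i) \<in> borel_measurable M) \<and>
     (AE \<omega> in M. (\<forall>i. 0 < w \<omega> i) \<and> (\<forall>i. w \<omega> (Suc i) < w \<omega> i)) \<and>
     (\<forall>A \<in> sets borel. emeasure ppp_intensity A < \<infinity> \<longrightarrow>
        (AE \<omega> in M. finite {i. w \<omega> i \<in> A}) \<and>
        (\<forall>k. measure M {\<omega> \<in> space M. atom_count (w \<omega>) A = k} =
              (measure ppp_intensity A) ^ k / fact k * exp (- measure ppp_intensity A))) \<and>
     (\<forall>n (B :: nat \<Rightarrow> real set).
        (\<forall>j<n. B j \<in> sets borel \<and> emeasure ppp_intensity (B j) < \<infinity>) \<longrightarrow>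
        disjoint_family_on B {..<n} \<longrightarrow>
        prob_space.indep_vars M (\<lambda>_. count_space UNIV)
          (\<lambda>j \<omega>. atom_count (w \<omega>) (B j)) {..<n})"

definition weighted_pmf :: "nat set \<Rightarrow> (nat \<Rightarrow> real) \<Rightarrow> nat pmf" where
  "weighted_pmf S v = embed_pmf (\<lambda>i. if i \<in> S then v i / (\<Sum>j\<in>S. v j) else 0)"

fun iid_list :: "'b pmf \<Rightarrow> nat \<Rightarrow> 'b list pmf" where
  "iid_list p 0 = return_pmf []"
| "iid_list p (Suc n) = bind_pmf p (\<lambda>x. map_pmf (\<lambda>xs. x # xs) (iid_list p n))"

fun draw_wo :: "(nat \<Rightarrow> real) \<Rightarrow> nat set \<Rightarrow> nat \<Rightarrow> nat set pmf" where
  "draw_wo v S 0 = return_pmf {}"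
| "draw_wo v S (Suc r) =
     bind_pmf (weighted_pmf S v) (\<lambda>i. map_pmf (insert i) (draw_wo v (S - {i}) r))"

text \<open>Number of index slots ceil(N^gamma); indices are 0..<L (paper: 1..L).\<close>
definition num_slots :: "real \<Rightarrow> nat \<Rightarrow> nat" where
  "num_slots \<gamma> N = nat \<lceil>real N powr \<gamma>\<rceil>"

text \<open>Conditional law, given the atoms w, of the set K^N.\<close>
definition K_pmf :: "real \<Rightarrow> real \<Rightarrow> (nat \<Rightarrow> real) \<Rightarrow> nat \<Rightarrow> nat set pmf" where
  "K_pmf \<gamma> \<beta> w N =
     (let L = num_slots \<gamma> N; v = (\<lambda>i. w i powr \<beta>) in
      bind_pmf (iid_list (weighted_pmf {..<L} v) N) (\<lambda>J.
        draw_wo v ({..<L} - set J) (N - card (set J))))"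

end

theory Submission
  imports Defs
begin



lemma weighted_pmf_pmf:
  assumes "finite S" "\<And>i. i \<in> S \<Longrightarrow> 0 \<le> v i" "0 < sum v S"
  shows "pmf (weighted_pmf S v) i = (if i \<in> S then v i / sum v S else 0)"
  unfolding weighted_pmf_def
proof (rule pmf_embed_pmf)
  show "\<And>x. 0 \<le> (if x \<in> S then v x / sum v S else 0)" using assms by auto
  have "(\<integral>\<^sup>+ x. ennreal (if x \<in> S then v x / sum v S else 0) \<partial>count_space UNIV)
     = (\<Sum>x\<in>S. ennreal (if x \<in> S then v x / sum v S else 0))"
    by (subst nn_integral_count_space') (use assms in auto)
  also have "\<dots> = ennreal (\<Sum>x\<in>S. v x / sum v S)"
    using assms by (subst sum_ennreal[symmetric]) auto
  also have "(\<Sum>x\<in>S. v x / sum v S) = 1"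
    using assms by (simp add: sum_divide_distrib[symmetric])
  finally show "(\<integral>\<^sup>+ x. ennreal (if x \<in> S then v x / sum v S else 0) \<partial>count_space UNIV) = 1"
    by simp
qed

lemma weighted_pmf_set:
  assumes "finite S" "\<And>i. i \<in> S \<Longrightarrow> 0 \<le> v i" "0 < sum v S"
  shows "set_pmf (weighted_pmf S v) \<subseteq> S"
  using weighted_pmf_pmf[OF assms] by (auto simp: set_pmf_iff split: if_splits)

lemma prob_bind_pmf:
  "measure_pmf.prob (bind_pmf p f) E = measure_pmf.expectation p (\<lambda>x. measure_pmf.prob (f x) E)"
proof -
  have "ennreal (measure_pmf.prob (bind_pmf p f) E) = emeasure (measure_pmf (bind_pmf p f)) E"
    by (simp add: measure_pmf.emeasure_eq_measure)
  also have "\<dots> = (\<integral>\<^sup>+ x. emeasure (measure_pmf (f x)) E \<partial>measure_pmf p)"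
    by (rule emeasure_bind_pmf)
  also have "\<dots> = (\<integral>\<^sup>+ x. ennreal (measure_pmf.prob (f x) E) \<partial>measure_pmf p)"
    by (simp add: measure_pmf.emeasure_eq_measure)
  also have "\<dots> = ennreal (measure_pmf.expectation p (\<lambda>x. measure_pmf.prob (f x) E))"
    by (rule nn_integral_eq_integral)
       (auto intro!: measure_pmf.integrable_const_bound[where B=1])
  finally show ?thesis
    by (simp add: measure_pmf.prob_space ennreal_inj)
qed

lemma set_iid_list: "xs \<in> set_pmf (iid_list p n) \<Longrightarrow> length xs = n \<and> set xs \<subseteq> set_pmf p"
  by (induction n arbitrary: xs) fastforce+

lemma set_draw_wo: "K \<in> set_pmf (draw_wo v S r) \<Longrightarrow> finite K"
  by (induction r arbitrary: S K) auto

lemma draw_wo_hit: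
  assumes S0: "finite S0" and v: "\<And>i. i \<in> S0 \<Longrightarrow> 0 \<le> v i \<and> v i \<le> V" and Wl: "0 < Wl"
    and V0: "0 \<le> V"
  shows "S \<subseteq> S0 \<Longrightarrow> sum v S \<ge> Wl + real r * V \<Longrightarrow>
    measure_pmf.prob (draw_wo v S r) {K. K \<inter> A \<noteq> {}} \<le> real r * sum v (A \<inter> S0) / Wl"
proof (induction r arbitrary: S)
  case 0
  then show ?case by simp
next
  case (Suc r)
  let ?WA = "sum v (A \<inter> S0)"
  let ?W = "sum v S"
  have finS: "finite S" using Suc.prems S0 finite_subset by blast
  have vS: "\<And>i. i \<in> S \<Longrightarrow> 0 \<le> v i" using Suc.prems v by blast
  have rV: "0 \<le> real (Suc r) * V" using V0 by simp
  have Wpos: "0 < ?W" using Suc.prems(2) Wl rV by linarith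
  have WA0: "0 \<le> ?WA" using v by (intro sum_nonneg) auto
  have IH: "measure_pmf.prob (draw_wo v (S - {i}) r) {K. K \<inter> A \<noteq> {}} \<le> real r * ?WA / Wl"
    if "i \<in> S" for i
  proof (rule Suc.IH)
    show "S - {i} \<subseteq> S0" using Suc.prems by auto
    have "sum v (S - {i}) = ?W - v i" using that finS by (simp add: sum_diff1)
    moreover have "v i \<le> V" using that Suc.prems v by auto
    ultimately show "Wl + real r * V \<le> sum v (S - {i})" using Suc.prems(2) by (simp add: algebra_simps)
  qed
  have hterm: "measure_pmf.prob (map_pmf (insert i) (draw_wo v (S - {i}) r)) {K. K \<inter> A \<noteq> {}}
      \<le> (if i \<in> A then 1 else 0) + real r * ?WA / Wl" if "i \<in> S" for i
  proof (cases "i \<in> A")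
    case True
    then show ?thesis using WA0 Wl by (simp add: measure_pmf.prob_le_1)
  next
    case False
    have "insert i -` {K. K \<inter> A \<noteq> {}} = {K. K \<inter> A \<noteq> {}}" using False by auto
    then show ?thesis using IH[OF that] False by (simp add: measure_map_pmf)
  qed
  have "measure_pmf.prob (draw_wo v S (Suc r)) {K. K \<inter> A \<noteq> {}}
      = (\<Sum>i\<in>S. pmf (weighted_pmf S v) i * measure_pmf.prob (map_pmf (insert i) (draw_wo v (S - {i}) r)) {K. K \<inter> A \<noteq> {}})"
    apply (simp add: prob_bind_pmf)
    apply (subst integral_measure_pmf[where A=S])
    using finS weighted_pmf_set[OF finS vS Wpos] by auto
  also have "\<dots> \<le> (\<Sum>i\<in>S. (v i / ?W) * ((if i \<in> A then 1 else 0) + real r * ?WA / Wl))"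
  proof (rule sum_mono)
    fix i assume i: "i \<in> S"
    have e: "pmf (weighted_pmf S v) i = v i / ?W" using weighted_pmf_pmf[OF finS vS Wpos] i by simp
    have "0 \<le> v i / ?W" using vS i Wpos by simp
    then show "pmf (weighted_pmf S v) i * measure_pmf.prob (map_pmf (insert i) (draw_wo v (S - {i}) r)) {K. K \<inter> A \<noteq> {}}
       \<le> (v i / ?W) * ((if i \<in> A then 1 else 0) + real r * ?WA / Wl)"
      unfolding e by (rule mult_left_mono[OF hterm[OF i]])
  qed
  also have "\<dots> = (\<Sum>i\<in>S \<inter> A. v i) / ?W + real r * ?WA / Wl"
  proof -
    have "(\<Sum>i\<in>S. (v i / ?W) * ((if i \<in> A then 1 else 0) + real r * ?WA / Wl))
       = (\<Sum>i\<in>S. (if i \<in> A then v i else 0)) / ?W + (\<Sum>i\<in>S. v i) / ?W * (real r * ?WA / Wl)"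
    proof -
      have "\<And>i. (v i / ?W) * ((if i \<in> A then 1 else 0) + real r * ?WA / Wl)
          = (if i \<in> A then v i else 0) / ?W + v i / ?W * (real r * ?WA / Wl)"
        by (simp add: distrib_left)
      then have "(\<Sum>i\<in>S. (v i / ?W) * ((if i \<in> A then 1 else 0) + real r * ?WA / Wl))
          = (\<Sum>i\<in>S. (if i \<in> A then v i else 0) / ?W + v i / ?W * (real r * ?WA / Wl))"
        by (rule sum.cong[OF refl])
      also have "\<dots> = (\<Sum>i\<in>S. (if i \<in> A then v i else 0)) / ?W + (\<Sum>i\<in>S. v i) / ?W * (real r * ?WA / Wl)"
        by (simp only: sum.distrib sum_divide_distrib[symmetric] sum_distrib_right[symmetric])
      finally show ?thesis .
    qed
    also have "(\<Sum>i\<in>S. (if i \<in> A then v i else 0)) = (\<Sum>i\<in>S \<inter> A. v i)"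
      using finS by (simp add: sum.inter_restrict)
    finally show ?thesis using Wpos by simp
  qed
  also have "\<dots> \<le> ?WA / Wl + real r * ?WA / Wl"
  proof -
    have "(\<Sum>i\<in>S \<inter> A. v i) \<le> ?WA"
      using Suc.prems S0 v by (intro sum_mono2) auto
    moreover have "Wl \<le> ?W" using Suc.prems(2) rV by linarith
    moreover have "0 \<le> (\<Sum>i\<in>S \<inter> A. v i)" using vS by (intro sum_nonneg) auto
    ultimately have "(\<Sum>i\<in>S \<inter> A. v i) / ?W \<le> ?WA / Wl"
      using Wl by (intro frac_le) auto
    then show ?thesis by simp
  qed
  also have "\<dots> = real (Suc r) * ?WA / Wl" by (simp add: algebra_simps add_divide_distrib)
  finally show ?case .
qed




lemma finite_set_iid_list:
  assumes "finite (set_pmf p)"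
  shows "finite (set_pmf (iid_list p n))"
proof -
  have "set_pmf (iid_list p n) \<subseteq> {xs. set xs \<subseteq> set_pmf p \<and> length xs = n}"
    using set_iid_list by blast
  moreover have "finite {xs. set xs \<subseteq> set_pmf p \<and> length xs = n}"
    using finite_lists_length_eq[OF assms] by simp
  ultimately show ?thesis by (rule finite_subset)
qed

lemma sum_pmf_mult_ind:
  assumes "finite A" "set_pmf p \<subseteq> A"
  shows "(\<Sum>x\<in>A. pmf p x * f x) = measure_pmf.expectation p f"
  using assms by (subst integral_measure_pmf[where A=A]) (auto simp: mult.commute)

lemma iid_list_mem:
  assumes fin: "finite (set_pmf p)"
  shows "measure_pmf.prob (iid_list p n) {xs. y \<in> set xs} \<le> real n * pmf p y"
proof (induction n)
  case 0
  then show ?case by simp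
next
  case (Suc n)
  let ?P = "set_pmf p"
  let ?q = "iid_list p n"
  have b: "measure_pmf.prob (map_pmf ((#) x) ?q) {xs. y \<in> set xs} \<le> (if x = y then 1 else 0) + real n * pmf p y" for x
  proof (cases "x = y")
    case True
    then show ?thesis by (simp add: measure_pmf.prob_le_1 add_increasing2)
  next
    case False
    have "(#) x -` {xs. y \<in> set xs} = {xs. y \<in> set xs}" using False by auto
    then show ?thesis using Suc.IH False by (simp add: measure_map_pmf)
  qed
  have "measure_pmf.prob (iid_list p (Suc n)) {xs. y \<in> set xs}
     = (\<Sum>x\<in>?P. pmf p x * measure_pmf.prob (map_pmf ((#) x) ?q) {xs. y \<in> set xs})"
    by (simp add: prob_bind_pmf sum_pmf_mult_ind[OF fin])
  also have "\<dots> \<le> (\<Sum>x\<in>?P. pmf p x * ((if x = y then 1 else 0) + real n * pmf p y))"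
    by (intro sum_mono mult_left_mono b) auto
  also have "\<dots> = (\<Sum>x\<in>?P. (if x = y then pmf p x else 0)) + real n * pmf p y * (\<Sum>x\<in>?P. pmf p x)"
  proof -
    have "\<And>x. pmf p x * ((if x = y then 1 else 0) + real n * pmf p y) = (if x = y then pmf p x else 0) + real n * pmf p y * pmf p x"
      by (simp add: algebra_simps)
    then have "(\<Sum>x\<in>?P. pmf p x * ((if x = y then 1 else 0) + real n * pmf p y)) = (\<Sum>x\<in>?P. (if x = y then pmf p x else 0) + real n * pmf p y * pmf p x)"
      by (rule sum.cong[OF refl])
    then show ?thesis by (simp only: sum.distrib sum_distrib_left)
  qed
  also have "(\<Sum>x\<in>?P. pmf p x) = 1" using fin by (simp add: sum_pmf_eq_1)
  also have "(\<Sum>x\<in>?P. (if x = y then pmf p x else 0)) \<le> pmf p y"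
    using fin by (simp add: sum.delta)
  finally show ?case by (simp add: algebra_simps)
qed

definition Dcoll :: "nat list \<Rightarrow> real" where
  "Dcoll xs = real (length xs) - real (card (set xs))"

lemma Dcoll_Cons: "Dcoll (x # xs) = Dcoll xs + (if x \<in> set xs then 1 else 0)"
  by (simp add: Dcoll_def card_insert_if)

lemma iid_list_Dcoll:
  assumes fin: "finite (set_pmf p)" and pm: "\<And>i. pmf p i \<le> pmax"
  shows "measure_pmf.expectation (iid_list p n) Dcoll \<le> real n * real n * pmax"
proof (induction n)
  case 0
  then show ?case by (simp add: Dcoll_def)
next
  case (Suc n)
  let ?P = "set_pmf p"
  let ?q = "iid_list p n"
  have finq: "finite (set_pmf ?q)" using finite_set_iid_list[OF fin] .
  have pm0: "0 \<le> pmax" using pm[of undefined] pmf_nonneg[of p undefined] by linarith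
  have b: "measure_pmf.expectation (map_pmf ((#) x) ?q) Dcoll \<le> real n * real n * pmax + real n * pmax" for x
  proof -
    have "measure_pmf.expectation (map_pmf ((#) x) ?q) Dcoll
        = measure_pmf.expectation ?q (\<lambda>xs. Dcoll xs + (if x \<in> set xs then 1 else 0))"
      by (simp add: Dcoll_Cons)
    also have "\<dots> = measure_pmf.expectation ?q Dcoll + measure_pmf.expectation ?q (\<lambda>xs. (if x \<in> set xs then 1 else 0))"
      by (rule Bochner_Integration.integral_add; rule integrable_measure_pmf_finite[OF finq])
    also have "measure_pmf.expectation ?q (\<lambda>xs. (if x \<in> set xs then 1 else 0)) = measure_pmf.prob ?q {xs. x \<in> set xs}"
    proof -
      have "(\<lambda>xs. if x \<in> set xs then 1 else 0::real) = indicator {xs. x \<in> set xs}" by (auto simp: fun_eq_iff)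
      then show ?thesis by simp
    qed
    also have "\<dots> \<le> real n * pmax"
      using iid_list_mem[OF fin, of n x] pm[of x] by (meson mult_left_mono of_nat_0_le_iff order_trans)
    finally show ?thesis using Suc.IH by linarith
  qed
  have "measure_pmf.expectation (iid_list p (Suc n)) Dcoll
     = (\<Sum>x\<in>?P. pmf p x * measure_pmf.expectation (map_pmf ((#) x) ?q) Dcoll)"
    apply simp
    apply (subst pmf_expectation_bind[where A="?P"])
    using fin finq by (auto simp: map_pmf_def[symmetric])
  also have "\<dots> \<le> (\<Sum>x\<in>?P. pmf p x * (real n * real n * pmax + real n * pmax))"
    by (intro sum_mono mult_left_mono b) auto
  also have "\<dots> = real n * real n * pmax + real n * pmax"
    using fin by (simp add: sum_distrib_right[symmetric] sum_pmf_eq_1)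
  also have "\<dots> \<le> real (Suc n) * real (Suc n) * pmax"
    using pm0 by (simp add: algebra_simps)
  finally show ?case .
qed


lemma K_bound:
  fixes v :: "nat \<Rightarrow> real"
  assumes v: "\<And>i. i < L \<Longrightarrow> 0 \<le> v i \<and> v i \<le> V" and V0: "0 \<le> V"
    and Wl: "0 < sum v {..<L} - real N * V"
  shows "measure_pmf.prob (bind_pmf (iid_list (weighted_pmf {..<L} v) N)
            (\<lambda>J. draw_wo v ({..<L} - set J) (N - card (set J)))) {K. K \<inter> A \<noteq> {}}
     \<le> real N * real N * (V / sum v {..<L}) * sum v (A \<inter> {..<L}) / (sum v {..<L} - real N * V)"
proof -
  define W0 where "W0 = sum v {..<L}"
  define Wl where "Wl = W0 - real N * V"
  define WA where "WA = sum v (A \<inter> {..<L})"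
  define p where "p = weighted_pmf {..<L} v"
  have Wlpos: "0 < Wl" using Wl by (simp add: Wl_def W0_def)
  have W0pos: "0 < W0" using Wlpos V0 unfolding Wl_def by (smt (verit) mult_nonneg_nonneg of_nat_0_le_iff)
  have vnn: "\<And>i. i \<in> {..<L} \<Longrightarrow> 0 \<le> v i" using v by auto
  have setp: "set_pmf p \<subseteq> {..<L}" unfolding p_def
    by (rule weighted_pmf_set) (use vnn W0pos W0_def in auto)
  have finp: "finite (set_pmf p)" using setp finite_subset by blast
  have pm: "pmf p i \<le> V / W0" for i
  proof -
    have "pmf p i = (if i \<in> {..<L} then v i / W0 else 0)" unfolding p_def W0_def
      by (rule weighted_pmf_pmf) (use vnn W0pos W0_def in auto)
    then show ?thesis using v[of i] W0pos V0 by (auto intro: divide_right_mono)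
  qed
  have WA0: "0 \<le> WA" unfolding WA_def using v by (intro sum_nonneg) auto
  have step: "measure_pmf.prob (draw_wo v ({..<L} - set J) (N - card (set J))) {K. K \<inter> A \<noteq> {}}
      \<le> Dcoll J * WA / Wl" if J: "J \<in> set_pmf (iid_list p N)" for J
  proof -
    have lenJ: "length J = N" and setJ: "set J \<subseteq> {..<L}" using set_iid_list[OF J] setp by auto
    have cardJ: "card (set J) \<le> N" using lenJ card_length by metis
    have D: "Dcoll J = real (N - card (set J))" using cardJ lenJ by (simp add: Dcoll_def)
    have sJ: "sum v (set J) \<le> real (card (set J)) * V"
      using sum_bounded_above[of "set J" v V] setJ v by auto
    have "sum v ({..<L} - set J) = W0 - sum v (set J)"
      using setJ by (simp add: W0_def sum_diff)
    also have "\<dots> \<ge> Wl + real (N - card (set J)) * V"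
      using sJ cardJ unfolding Wl_def by (simp add: of_nat_diff algebra_simps)
    finally have "Wl + real (N - card (set J)) * V \<le> sum v ({..<L} - set J)" .
    from draw_wo_hit[of "{..<L}" v V Wl, OF _ _ Wlpos V0 _ this]
    have "measure_pmf.prob (draw_wo v ({..<L} - set J) (N - card (set J))) {K. K \<inter> A \<noteq> {}}
       \<le> real (N - card (set J)) * WA / Wl" using v unfolding WA_def by auto
    then show ?thesis unfolding D by simp
  qed
  have "measure_pmf.prob (bind_pmf (iid_list p N)
            (\<lambda>J. draw_wo v ({..<L} - set J) (N - card (set J)))) {K. K \<inter> A \<noteq> {}}
      = measure_pmf.expectation (iid_list p N) (\<lambda>J. measure_pmf.prob (draw_wo v ({..<L} - set J) (N - card (set J))) {K. K \<inter> A \<noteq> {}})"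
    by (rule prob_bind_pmf)
  also have "\<dots> \<le> measure_pmf.expectation (iid_list p N) (\<lambda>J. Dcoll J * WA / Wl)"
    by (rule integral_mono_AE)
       (auto intro!: integrable_measure_pmf_finite finite_set_iid_list finp AE_pmfI step)
  also have "\<dots> = measure_pmf.expectation (iid_list p N) Dcoll * WA / Wl" by simp
  also have "\<dots> \<le> (real N * real N * (V / W0)) * WA / Wl"
    by (intro divide_right_mono mult_right_mono iid_list_Dcoll[OF finp pm]) (use WA0 Wlpos in simp_all)
  finally show ?thesis unfolding p_def WA_def Wl_def W0_def by simp
qed




lemma weighted_pmf_zero:
  assumes "sum v S = 0"
  shows "weighted_pmf S v = embed_pmf (\<lambda>_. 0)"
  using assms unfolding weighted_pmf_def by (simp cong: if_cong)

lemma prob_finite_support: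
  assumes "finite S" "set_pmf p \<subseteq> S"
  shows "measure_pmf.prob p A = (\<Sum>i\<in>A \<inter> S. pmf p i)"
proof -
  have "measure_pmf.prob p A = measure_pmf.expectation p (indicator A)" by simp
  also have "\<dots> = (\<Sum>i\<in>S. indicator A i * pmf p i)"
    by (rule integral_measure_pmf_real) (use assms in auto)
  also have "\<dots> = (\<Sum>i\<in>S \<inter> A. pmf p i)"
    using assms by (simp add: sum.inter_restrict indicator_def if_distrib cong: if_cong)
  finally show ?thesis by (simp add: Int_commute)
qed

lemma measurable_weighted_pmf:
  assumes S: "finite S" and v: "\<And>i. (\<lambda>x. v x i) \<in> borel_measurable M"
    and vnn: "\<And>x i. 0 \<le> v x i"
  shows "(\<lambda>x. measure_pmf (weighted_pmf S (v x))) \<in> M \<rightarrow>\<^sub>M subprob_algebra (count_space UNIV)"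
proof (rule measurable_subprob_algebra)
  fix a show "subprob_space (measure_pmf (weighted_pmf S (v a)))"
    by (simp add: measure_pmf.subprob_space_axioms)
  show "sets (measure_pmf (weighted_pmf S (v a))) = sets (count_space UNIV)" by simp
next
  fix A :: "nat set"
  let ?c = "embed_pmf (\<lambda>_::nat. 0::real)"
  have eq: "emeasure (measure_pmf (weighted_pmf S (v x))) A =
     (if sum (v x) S = 0 then emeasure (measure_pmf ?c) A
      else ennreal (\<Sum>i\<in>A \<inter> S. v x i / sum (v x) S))" for x
  proof (cases "sum (v x) S = 0")
    case True
    then show ?thesis by (simp add: weighted_pmf_zero)
  next
    case False
    then have pos: "0 < sum (v x) S" using vnn sum_nonneg[of S "v x"] by fastforce
    have "emeasure (measure_pmf (weighted_pmf S (v x))) A = ennreal (\<Sum>i\<in>A \<inter> S. pmf (weighted_pmf S (v x)) i)"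
      by (simp add: measure_pmf.emeasure_eq_measure prob_finite_support[OF S weighted_pmf_set[OF S _ pos]] vnn)
    also have "(\<Sum>i\<in>A \<inter> S. pmf (weighted_pmf S (v x)) i) = (\<Sum>i\<in>A \<inter> S. v x i / sum (v x) S)"
      by (rule sum.cong[OF refl]) (simp add: weighted_pmf_pmf[OF S _ pos] vnn)
    finally show ?thesis using False by simp
  qed
  show "(\<lambda>x. emeasure (measure_pmf (weighted_pmf S (v x))) A) \<in> borel_measurable M"
    unfolding eq using v by measurable
qed


lemma measurable_pmf_subprob:
  assumes "\<And>A. (\<lambda>x. emeasure (measure_pmf (P x)) A) \<in> borel_measurable M"
  shows "(\<lambda>x. measure_pmf (P x)) \<in> M \<rightarrow>\<^sub>M subprob_algebra (count_space UNIV)"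
  by (rule measurable_subprob_algebra) (auto simp: measure_pmf.subprob_space_axioms assms)

lemma measurable_map_pmf_subprob:
  assumes "(\<lambda>x. measure_pmf (P x)) \<in> M \<rightarrow>\<^sub>M subprob_algebra (count_space UNIV)"
  shows "(\<lambda>x. measure_pmf (map_pmf f (P x))) \<in> M \<rightarrow>\<^sub>M subprob_algebra (count_space UNIV)"
proof -
  have "(\<lambda>x. distr (measure_pmf (P x)) (count_space UNIV) f) \<in> M \<rightarrow>\<^sub>M subprob_algebra (count_space UNIV)"
    by (rule measurable_compose[OF assms measurable_distr]) simp
  then show ?thesis by (simp add: map_pmf_rep_eq)
qed

lemma measurable_bind_pmf_subprob:
  fixes g :: "'a \<Rightarrow> 'i::countable \<Rightarrow> 'c pmf"
  assumes "(\<lambda>x. measure_pmf (P x)) \<in> M \<rightarrow>\<^sub>M subprob_algebra (count_space UNIV)"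
    and "\<And>i. (\<lambda>x. measure_pmf (g x i)) \<in> M \<rightarrow>\<^sub>M subprob_algebra (count_space UNIV)"
  shows "(\<lambda>x. measure_pmf (bind_pmf (P x) (g x))) \<in> M \<rightarrow>\<^sub>M subprob_algebra (count_space UNIV)"
proof -
  have g2: "(\<lambda>y. measure_pmf (g (fst y) (snd y))) \<in> M \<Otimes>\<^sub>M count_space UNIV \<rightarrow>\<^sub>M subprob_algebra (count_space UNIV)"
  proof (rule measurable_compose_countable'[where f="\<lambda>i y. measure_pmf (g (fst y) i)" and g="snd" and I=UNIV])
    fix i :: 'i
    show "(\<lambda>y. measure_pmf (g (fst y) i)) \<in> M \<Otimes>\<^sub>M count_space UNIV \<rightarrow>\<^sub>M subprob_algebra (count_space UNIV)"
      by (rule measurable_compose[OF measurable_fst assms(2)])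
  qed auto
  have "(\<lambda>x. measure_pmf (P x) \<bind> (\<lambda>i. measure_pmf (g x i))) \<in> M \<rightarrow>\<^sub>M subprob_algebra (count_space UNIV)"
    by (rule measurable_bind'[OF assms(1)]) (use g2 in \<open>simp add: case_prod_beta\<close>)
  then show ?thesis by (simp add: measure_pmf_bind)
qed

lemma measurable_draw_wo:
  assumes v: "\<And>i. (\<lambda>x. v x i) \<in> borel_measurable M" and vnn: "\<And>x i. 0 \<le> v x i"
  shows "finite S \<Longrightarrow> (\<lambda>x. measure_pmf (draw_wo (v x) S r)) \<in> M \<rightarrow>\<^sub>M subprob_algebra (count_space UNIV)"
proof (induction r arbitrary: S)
  case 0
  show ?case by (simp add: measurable_pmf_subprob)
next
  case (Suc r)
  show ?case
    unfolding draw_wo.simps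
    by (intro measurable_bind_pmf_subprob measurable_weighted_pmf measurable_map_pmf_subprob Suc v vnn)
       (use Suc.prems in auto)
qed

lemma measurable_iid_list:
  fixes P :: "'a \<Rightarrow> 'b::countable pmf"
  assumes "(\<lambda>x. measure_pmf (P x)) \<in> M \<rightarrow>\<^sub>M subprob_algebra (count_space UNIV)"
  shows "(\<lambda>x. measure_pmf (iid_list (P x) n)) \<in> M \<rightarrow>\<^sub>M subprob_algebra (count_space UNIV)"
proof (induction n)
  case 0
  show ?case by (simp add: measurable_pmf_subprob)
next
  case (Suc n)
  show ?case
    unfolding iid_list.simps
    by (rule measurable_bind_pmf_subprob[where g="\<lambda>x i. map_pmf ((#) i) (iid_list (P x) n)"])
       (intro assms measurable_map_pmf_subprob Suc)+
qed


lemma pred_mem_snd: "Measurable.pred (M \<Otimes>\<^sub>M count_space UNIV) (\<lambda>y. (k::nat) \<in> snd y)"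
proof -
  have "(\<lambda>K::nat set. k \<in> K) \<in> count_space UNIV \<rightarrow>\<^sub>M count_space UNIV" by simp
  then show ?thesis by (rule measurable_compose[OF measurable_snd])
qed

lemma measurable_hit_indicator:
  fixes w :: "'a \<Rightarrow> nat \<Rightarrow> real"
  assumes w: "\<And>i. (\<lambda>x. w x i) \<in> borel_measurable M"
  shows "(\<lambda>(x, K). indicator {K. \<forall>k\<in>K. w x k < c} K :: ennreal) \<in> borel_measurable (M \<Otimes>\<^sub>M count_space UNIV)"
proof -
  have p: "Measurable.pred (M \<Otimes>\<^sub>M count_space UNIV) (\<lambda>y. \<forall>k. k \<in> snd y \<longrightarrow> w (fst y) k < c)"
  proof (rule pred_intros_countable(1))
    fix k
    have "Measurable.pred (M \<Otimes>\<^sub>M count_space UNIV) (\<lambda>y. w (fst y) k < c)"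
      using w[of k] by measurable
    then show "Measurable.pred (M \<Otimes>\<^sub>M count_space UNIV) (\<lambda>y. k \<in> snd y \<longrightarrow> w (fst y) k < c)"
      by (rule pred_intros_logic(4)[OF pred_mem_snd[of k M]])
  qed
  have e: "(\<lambda>(x, K). indicator {K. \<forall>k\<in>K. w x k < c} K :: ennreal) = (\<lambda>y. if (\<forall>k. k \<in> snd y \<longrightarrow> w (fst y) k < c) then 1 else 0)"
    by (auto simp: fun_eq_iff indicator_def)
  show ?thesis unfolding e using p by measurable
qed





lemma set_K_pmf_finite: "K \<in> set_pmf (K_pmf \<gamma> \<beta> w N) \<Longrightarrow> finite K"
  unfolding K_pmf_def Let_def by (auto dest: set_draw_wo)

lemma target_eq:
  "measure_pmf.prob (K_pmf \<gamma> \<beta> w N) {K. card {k\<in>K. w k \<ge> c} = 0}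
   = measure_pmf.prob (K_pmf \<gamma> \<beta> w N) {K. \<forall>k\<in>K. w k < c}"
proof -
  let ?p = "K_pmf \<gamma> \<beta> w N"
  have "{K. card {k\<in>K. w k \<ge> c} = 0} \<inter> set_pmf ?p = {K. \<forall>k\<in>K. w k < c} \<inter> set_pmf ?p"
  proof (intro equalityI subsetI)
    fix K assume K: "K \<in> {K. card {k\<in>K. w k \<ge> c} = 0} \<inter> set_pmf ?p"
    then have "finite K" using set_K_pmf_finite by blast
    then show "K \<in> {K. \<forall>k\<in>K. w k < c} \<inter> set_pmf ?p" using K by (auto simp: not_le)
  next
    fix K assume K: "K \<in> {K. \<forall>k\<in>K. w k < c} \<inter> set_pmf ?p"
    then have "{k\<in>K. w k \<ge> c} = {}" by (auto simp: not_le)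
    then have "card {k\<in>K. w k \<ge> c} = 0" by (simp only: card.empty)
    then show "K \<in> {K. card {k\<in>K. w k \<ge> c} = 0} \<inter> set_pmf ?p" using K by simp
  qed
  then have "measure_pmf.prob ?p ({K. card {k\<in>K. w k \<ge> c} = 0} \<inter> set_pmf ?p)
     = measure_pmf.prob ?p ({K. \<forall>k\<in>K. w k < c} \<inter> set_pmf ?p)" by simp
  then show ?thesis by (simp only: measure_Int_set_pmf)
qed

lemma measurable_integrand:
  fixes w :: "'a \<Rightarrow> nat \<Rightarrow> real"
  assumes w: "\<And>i. (\<lambda>x. w x i) \<in> borel_measurable M"
  shows "(\<lambda>x. measure_pmf.prob (K_pmf \<gamma> \<beta> (w x) N) {K. card {k\<in>K. w x k \<ge> c} = 0}) \<in> borel_measurable M"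
proof -
  define v where "v = (\<lambda>x i. w x i powr \<beta>)"
  have vm: "\<And>i. (\<lambda>x. v x i) \<in> borel_measurable M" unfolding v_def using w by measurable
  have vnn: "\<And>x i. 0 \<le> v x i" unfolding v_def by simp
  define L where "L = num_slots \<gamma> N"
  have W: "(\<lambda>x. measure_pmf (weighted_pmf {..<L} (v x))) \<in> M \<rightarrow>\<^sub>M subprob_algebra (count_space UNIV)"
    by (rule measurable_weighted_pmf[OF _ vm vnn]) simp
  have I: "(\<lambda>x. measure_pmf (iid_list (weighted_pmf {..<L} (v x)) N)) \<in> M \<rightarrow>\<^sub>M subprob_algebra (count_space UNIV)"
    by (rule measurable_iid_list[OF W])
  have D: "\<And>J. (\<lambda>x. measure_pmf (draw_wo (v x) ({..<L} - set J) (N - card (set J)))) \<in> M \<rightarrow>\<^sub>M subprob_algebra (count_space UNIV)"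
    by (rule measurable_draw_wo[OF vm vnn]) simp
  have KK: "K_pmf \<gamma> \<beta> (w x) N = bind_pmf (iid_list (weighted_pmf {..<L} (v x)) N) (\<lambda>J. draw_wo (v x) ({..<L} - set J) (N - card (set J)))" for x
    by (simp add: K_pmf_def v_def L_def Let_def)
  have P: "(\<lambda>x. measure_pmf (K_pmf \<gamma> \<beta> (w x) N)) \<in> M \<rightarrow>\<^sub>M subprob_algebra (count_space UNIV)"
    unfolding KK by (rule measurable_bind_pmf_subprob[OF I D])
  have e: "measure_pmf.prob (K_pmf \<gamma> \<beta> (w x) N) {K. card {k\<in>K. w x k \<ge> c} = 0}
     = enn2real (\<integral>\<^sup>+K. indicator {K. \<forall>k\<in>K. w x k < c} K \<partial>measure_pmf (K_pmf \<gamma> \<beta> (w x) N))" for x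
    by (subst target_eq) (simp add: measure_def)
  show ?thesis unfolding e
    by (intro borel_measurable_enn2real nn_integral_measurable_subprob_algebra2[OF measurable_hit_indicator[OF w] P])
qed




lemma pow_fact_le_exp:
  assumes "0 \<le> (x::real)"
  shows "x ^ k / fact k \<le> exp x"
proof -
  obtain t where "exp x = (\<Sum>m<Suc k. x ^ m / fact m) + exp t / fact (Suc k) * x ^ Suc k"
    using Maclaurin_exp_le by blast
  moreover have "x ^ k / fact k \<le> (\<Sum>m<Suc k. x ^ m / fact m)"
    using assms by (intro member_le_sum) auto
  moreover have "0 \<le> exp t / fact (Suc k) * x ^ Suc k" using assms by simp
  ultimately show ?thesis by linarith
qed

lemma pow_fact_le:
  assumes "0 \<le> (l::real)" "0 < m"
  shows "l ^ m / fact m \<le> (exp 1 * l / real m) ^ m"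
proof -
  have "l ^ m / fact m = (l / real m) ^ m * (real m ^ m / fact m)"
    using assms by (simp add: power_divide)
  also have "\<dots> \<le> (l / real m) ^ m * exp (real m)"
    using assms by (intro mult_left_mono pow_fact_le_exp) auto
  also have "exp (real m) = exp 1 ^ m" by (simp add: exp_of_nat_mult[symmetric])
  also have "(l / real m) ^ m * exp 1 ^ m = (exp 1 * l / real m) ^ m"
    by (simp add: power_mult_distrib[symmetric] mult.commute)
  finally show ?thesis .
qed

lemma intensity_ge:
  assumes "0 < t"
  shows "emeasure ppp_intensity {t..} = ennreal (1 / t)"
proof -
  have "emeasure ppp_intensity {t..} = (\<integral>\<^sup>+x. (if 0 < x then ennreal (1 / x ^ 2) else 0) * indicator {t..} x \<partial>lborel)"
    unfolding ppp_intensity_def by (subst emeasure_density) auto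
  also have "\<dots> = (\<integral>\<^sup>+x. ennreal (indicator {t..} x * (1 / x ^ 2)) \<partial>lborel)"
    using assms by (intro nn_integral_cong) (auto simp: indicator_def)
  also have "\<dots> = ennreal (1 / (real (2 - 1) * t ^ (2 - 1)))"
    by (rule nn_integral_has_integral_lebesgue[OF _ has_integral_inverse_power_to_inf]) (use assms in auto)
  finally show ?thesis by simp
qed

lemma poisson_ge:
  assumes P: "poisson_atoms M w" and t: "0 < t"
  shows "AE \<omega> in M. finite {i. w \<omega> i \<in> {t..}}"
    and "\<And>k. measure M {\<omega> \<in> space M. atom_count (w \<omega>) {t..} = k} = (1/t) ^ k / fact k * exp (- (1/t))"
proof -
  have e: "emeasure ppp_intensity {t..} = ennreal (1 / t)" by (rule intensity_ge[OF t])
  have m: "measure ppp_intensity {t..} = 1 / t" using e t by (simp add: measure_def)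
  have s: "{t..} \<in> sets borel" by simp
  have f: "emeasure ppp_intensity {t..} < \<infinity>" using e by simp
  have H: "\<forall>A \<in> sets borel. emeasure ppp_intensity A < \<infinity> \<longrightarrow>
        (AE \<omega> in M. finite {i. w \<omega> i \<in> A}) \<and>
        (\<forall>k. measure M {\<omega> \<in> space M. atom_count (w \<omega>) A = k} =
              (measure ppp_intensity A) ^ k / fact k * exp (- measure ppp_intensity A))"
    using P unfolding poisson_atoms_def apply (elim conjE) by assumption
  note H2 = H[rule_format, OF s f]
  show "AE \<omega> in M. finite {i. w \<omega> i \<in> {t..}}" using H2 by (rule conjunct1)
  fix k
  show "measure M {\<omega> \<in> space M. atom_count (w \<omega>) {t..} = k} = (1/t) ^ k / fact k * exp (- (1/t))"
    using conjunct2[OF H2] unfolding m by (rule spec)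
qed


lemma poisson_tail:
  fixes X :: "'a \<Rightarrow> nat"
  assumes ps: "prob_space M" and l: "0 < l"
    and P: "\<And>k. measure M {x\<in>space M. X x = k} = l ^ k / fact k * exp (- l)"
  shows "\<And>k. {x\<in>space M. X x = k} \<in> sets M"
    and "\<And>m. measure M {x\<in>space M. X x < m} = (\<Sum>k<m. l ^ k / fact k * exp (- l))"
    and "\<And>m. measure M {x\<in>space M. m \<le> X x} = 1 - (\<Sum>k<m. l ^ k / fact k * exp (- l))"
    and "\<And>m. {x\<in>space M. X x < m} \<in> sets M"
proof -
  interpret prob_space M by (rule ps)
  show S: "{x\<in>space M. X x = k} \<in> sets M" for k
  proof (rule ccontr)
    assume "{x\<in>space M. X x = k} \<notin> sets M"
    then have "measure M {x\<in>space M. X x = k} = 0" by (rule measure_notin_sets)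
    moreover have "0 < l ^ k / fact k * exp (- l)" using l by (intro mult_pos_pos divide_pos_pos zero_less_power) auto
    ultimately show False using P[of k] by linarith
  qed
  show S2: "{x\<in>space M. X x < m} \<in> sets M" for m
  proof -
    have "{x\<in>space M. X x < m} = (\<Union>k<m. {x\<in>space M. X x = k})" by auto
    then show ?thesis using S by auto
  qed
  show L: "measure M {x\<in>space M. X x < m} = (\<Sum>k<m. l ^ k / fact k * exp (- l))" for m
  proof (induction m)
    case 0
    then show ?case by simp
  next
    case (Suc m)
    have "{x\<in>space M. X x < Suc m} = {x\<in>space M. X x < m} \<union> {x\<in>space M. X x = m}" by auto
    moreover have "measure M ({x\<in>space M. X x < m} \<union> {x\<in>space M. X x = m}) = measure M {x\<in>space M. X x < m} + measure M {x\<in>space M. X x = m}"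
      by (rule finite_measure_Union) (use S S2 in auto)
    ultimately have "measure M {x\<in>space M. X x < Suc m} = measure M {x\<in>space M. X x < m} + measure M {x\<in>space M. X x = m}"
      by simp
    then show ?case using Suc P by simp
  qed
  show "measure M {x\<in>space M. m \<le> X x} = 1 - (\<Sum>k<m. l ^ k / fact k * exp (- l))" for m
  proof -
    have "{x\<in>space M. m \<le> X x} = space M - {x\<in>space M. X x < m}" by auto
    then show ?thesis using prob_compl[OF S2[of m]] L[of m] by simp
  qed
qed

lemma poisson_upper:
  fixes X :: "'a \<Rightarrow> nat"
  assumes ps: "prob_space M" and l: "0 < l"
    and P: "\<And>k. measure M {x\<in>space M. X x = k} = l ^ k / fact k * exp (- l)"
    and m: "0 < m"
  shows "measure M {x\<in>space M. m \<le> X x} \<le> (exp 1 * l / real m) ^ m"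
proof -
  obtain t where t: "\<bar>t\<bar> \<le> \<bar>l\<bar>" and e: "exp l = (\<Sum>k<m. l ^ k / fact k) + exp t / fact m * l ^ m"
    using Maclaurin_exp_le by blast
  have "measure M {x\<in>space M. m \<le> X x} = 1 - (\<Sum>k<m. l ^ k / fact k * exp (- l))"
    by (rule poisson_tail(3)[OF ps l P])
  also have "\<dots> = exp (- l) * (exp l - (\<Sum>k<m. l ^ k / fact k))"
  proof -
    have "(\<Sum>k<m. l ^ k / fact k * exp (- l)) = exp (- l) * (\<Sum>k<m. l ^ k / fact k)"
      by (simp add: sum_distrib_left mult.commute)
    moreover have "exp (- l) * exp l = 1" by (simp add: exp_add[symmetric])
    ultimately show ?thesis by (simp add: right_diff_distrib)
  qed
  also have "\<dots> = exp (t - l) * (l ^ m / fact m)"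
    unfolding e by (simp add: exp_diff exp_minus field_simps)
  also have "\<dots> \<le> 1 * (l ^ m / fact m)"
    using t l by (intro mult_right_mono) auto
  also have "\<dots> \<le> (exp 1 * l / real m) ^ m"
    using pow_fact_le[of l m] l m by simp
  finally show ?thesis .
qed

lemma pow_le_exp_mult:
  assumes "0 \<le> (l::real)" "0 < m" "k \<le> m" "real m \<le> l"
  shows "l ^ k / fact k \<le> (exp 1 * l / real m) ^ m"
proof -
  have "l ^ k / fact k = (l / real m) ^ k * (real m ^ k / fact k)"
    using assms by (simp add: power_divide)
  also have "\<dots> \<le> (l / real m) ^ m * exp (real m)"
  proof (rule mult_mono)
    show "(l / real m) ^ k \<le> (l / real m) ^ m"
      using assms by (intro power_increasing) auto
    show "real m ^ k / fact k \<le> exp (real m)" by (rule pow_fact_le_exp) simp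
  qed (use assms in auto)
  also have "exp (real m) = exp 1 ^ m" by (simp add: exp_of_nat_mult[symmetric])
  also have "(l / real m) ^ m * exp 1 ^ m = (exp 1 * l / real m) ^ m"
    by (simp add: power_mult_distrib[symmetric] mult.commute)
  finally show ?thesis .
qed

lemma poisson_lower:
  fixes X :: "'a \<Rightarrow> nat"
  assumes ps: "prob_space M" and l: "0 < l"
    and P: "\<And>k. measure M {x\<in>space M. X x = k} = l ^ k / fact k * exp (- l)"
    and m: "0 < m" "real m \<le> l"
  shows "measure M {x\<in>space M. X x < m} \<le> real m * (exp 1 * l / real m) ^ m * exp (- l)"
proof -
  have "measure M {x\<in>space M. X x < m} = (\<Sum>k<m. l ^ k / fact k * exp (- l))"
    by (rule poisson_tail(2)[OF ps l P])
  also have "\<dots> \<le> (\<Sum>k<m. (exp 1 * l / real m) ^ m * exp (- l))"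
    using l m by (intro sum_mono mult_right_mono pow_le_exp_mult) auto
  also have "\<dots> = real m * (exp 1 * l / real m) ^ m * exp (- l)" by simp
  finally show ?thesis .
qed




lemma dec_downward:
  assumes dec: "\<And>i. w (Suc i) < (w i :: real)" and "i \<le> j" "t \<le> w j"
  shows "t \<le> w i"
proof -
  have "w j \<le> w i" using assms(2)
  proof (induction j)
    case 0 then show ?case by simp
  next
    case (Suc j)
    then show ?case using dec[of j] by (cases "i = Suc j") (auto simp: le_Suc_eq)
  qed
  then show ?thesis using assms(3) by simp
qed

lemma downward_card:
  assumes dec: "\<And>i. w (Suc i) < (w i :: real)" and fin: "finite {i. t \<le> w i}"
    and m: "m \<le> card {i. t \<le> w i}"
  shows "{..<m} \<subseteq> {i. t \<le> w i}"
proof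
  fix k assume k: "k \<in> {..<m}"
  show "k \<in> {i. t \<le> w i}"
  proof (rule ccontr)
    assume nk: "k \<notin> {i. t \<le> w i}"
    have "{i. t \<le> w i} \<subseteq> {..<k}"
    proof
      fix j assume j: "j \<in> {i. t \<le> w i}"
      show "j \<in> {..<k}"
      proof (rule ccontr)
        assume "j \<notin> {..<k}"
        then have "k \<le> j" by simp
        then have "t \<le> w k" using dec_downward[of w k j t, OF dec] j by blast
        then show False using nk by simp
      qed
    qed
    then have "card {i. t \<le> w i} \<le> k" using card_mono[of "{..<k}"] by fastforce
    then show False using m k by simp
  qed
qed

lemma level_bound:
  fixes t :: "nat \<Rightarrow> real" and y :: real
  assumes "t 0 \<le> y" "y < t J" "0 \<le> \<beta>" "0 < t 0" "\<And>j. j \<le> J \<Longrightarrow> t 0 \<le> t j"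
  shows "y powr \<beta> \<le> (\<Sum>j<J. if t j \<le> y then t (Suc j) powr \<beta> else 0)"
proof -
  define k where "k = Max {j. j < J \<and> t j \<le> y}"
  have J0: "0 < J" using assms by (cases J) auto
  have ne: "{j. j < J \<and> t j \<le> y} \<noteq> {}" using assms J0 by auto
  have fin: "finite {j. j < J \<and> t j \<le> y}" by simp
  have kin: "k < J \<and> t k \<le> y" using Max_in[OF fin ne] unfolding k_def by simp
  have lt: "y < t (Suc k)"
  proof (cases "Suc k < J")
    case True
    have "Suc k \<notin> {j. j < J \<and> t j \<le> y}" using Max_ge[OF fin, of "Suc k"] unfolding k_def[symmetric] by auto
    then show ?thesis using True by auto
  next
    case False
    then have "Suc k = J" using kin by simp
    then show ?thesis using assms by simp
  qed
  have y0: "0 < y" using assms by linarith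
  have "y powr \<beta> \<le> t (Suc k) powr \<beta>" using lt y0 assms by (intro powr_mono2) auto
  also have "\<dots> = (if t k \<le> y then t (Suc k) powr \<beta> else 0)" using kin by simp
  also have "\<dots> \<le> (\<Sum>j<J. if t j \<le> y then t (Suc j) powr \<beta> else 0)"
    using kin by (intro member_le_sum) auto
  finally show ?thesis .
qed


lemma bound_mono:
  fixes N W W' V A A' D :: real
  assumes "0 \<le> N" "0 \<le> V" "W' \<le> W" "0 < W' - D" "0 \<le> A" "A \<le> A'" "0 \<le> D"
  shows "N * (V / W) * A / (W - D) \<le> N * (V / W') * A' / (W' - D)"
proof -
  have W'0: "0 < W'" using assms by linarith
  have "V / W \<le> V / W'" using assms W'0 by (intro divide_left_mono) auto
  then have "N * (V / W) * A \<le> N * (V / W') * A'"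
    using assms W'0 by (intro mult_mono) (auto intro: mult_nonneg_nonneg)
  moreover have "0 \<le> N * (V / W') * A'" using assms W'0 by simp
  ultimately show ?thesis using assms by (intro frac_le) auto
qed

lemma good_bound:
  fixes w :: "nat \<Rightarrow> real" and t :: "nat \<Rightarrow> real" and x :: "nat \<Rightarrow> real"
  assumes pos: "\<And>i. 0 < w i" and dec: "\<And>i. w (Suc i) < w i"
    and \<beta>: "0 < \<beta>" "\<beta> \<le> 1"
    and U: "1 \<le> U" "\<And>i. w i < U"
    and low: "0 < b" "finite {i. b \<le> w i}" "m3 \<le> card {i. b \<le> w i}" "m3 \<le> num_slots \<gamma> N"
    and lev: "0 < t 0" "\<And>j. j \<le> J \<Longrightarrow> t 0 \<le> t j" "U \<le> t J"
      "\<And>j. j < J \<Longrightarrow> finite {i. t j \<le> w i} \<and> real (card {i. t j \<le> w i}) \<le> x j"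
    and Wl: "0 < real m3 * b powr \<beta> - real N * U"
  shows "1 - real N * real N * (U / (real m3 * b powr \<beta>)) * (\<Sum>j<J. x j * t (Suc j) powr \<beta>)
            / (real m3 * b powr \<beta> - real N * U)
       \<le> measure_pmf.prob (K_pmf \<gamma> \<beta> w N) {K. card {k\<in>K. w k \<ge> t 0} = 0}"
proof -
  define L where "L = num_slots \<gamma> N"
  define v where "v = (\<lambda>i. w i powr \<beta>)"
  define A where "A = {k. t 0 \<le> w k}"
  define W0 where "W0 = sum v {..<L}"
  define W' where "W' = real m3 * b powr \<beta>"
  define WA where "WA = sum v (A \<inter> {..<L})"
  define WA' where "WA' = (\<Sum>j<J. x j * t (Suc j) powr \<beta>)"
  have vU: "0 \<le> v i \<and> v i \<le> U" for i
  proof -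
    have "v i \<le> U powr \<beta>" unfolding v_def using pos[of i] U \<beta> by (intro powr_mono2) (auto intro: less_imp_le)
    also have "\<dots> \<le> U powr 1" using U \<beta> by (intro powr_mono) auto
    finally show ?thesis using U by (simp add: v_def)
  qed
  have U0: "0 \<le> U" using U by simp
  have W0W': "W' \<le> W0"
  proof -
    have sub: "{..<m3} \<subseteq> {i. b \<le> w i}" by (rule downward_card[OF dec low(2) low(3)])
    have "W' = (\<Sum>i<m3. b powr \<beta>)" unfolding W'_def by simp
    also have "\<dots> \<le> (\<Sum>i<m3. v i)"
      using sub low(1) \<beta> unfolding v_def by (intro sum_mono powr_mono2) auto
    also have "\<dots> \<le> W0" unfolding W0_def L_def using low(4) vU by (intro sum_mono2) auto
    finally show ?thesis .
  qed
  have WAWA': "WA \<le> WA'"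
  proof -
    let ?F = "A \<inter> {..<L}"
    have "WA \<le> (\<Sum>i\<in>?F. \<Sum>j<J. if t j \<le> w i then t (Suc j) powr \<beta> else 0)"
      unfolding WA_def
    proof (rule sum_mono)
      fix i assume i: "i \<in> ?F"
      show "v i \<le> (\<Sum>j<J. if t j \<le> w i then t (Suc j) powr \<beta> else 0)"
        unfolding v_def
        by (rule level_bound) (use i lev U(2)[of i] \<beta> in \<open>auto simp: A_def intro: less_le_trans\<close>)
    qed
    also have "\<dots> = (\<Sum>j<J. \<Sum>i\<in>?F. if t j \<le> w i then t (Suc j) powr \<beta> else 0)"
      by (rule sum.swap)
    also have "\<dots> = (\<Sum>j<J. t (Suc j) powr \<beta> * real (card (?F \<inter> {i. t j \<le> w i})))"
      by (rule sum.cong[OF refl]) (simp add: sum.If_cases)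
    also have "\<dots> \<le> (\<Sum>j<J. t (Suc j) powr \<beta> * x j)"
    proof (rule sum_mono)
      fix j assume j: "j \<in> {..<J}"
      have "card (?F \<inter> {i. t j \<le> w i}) \<le> card {i. t j \<le> w i}"
        using lev(4)[of j] j by (intro card_mono) auto
      then have "real (card (?F \<inter> {i. t j \<le> w i})) \<le> real (card {i. t j \<le> w i})" by simp
      moreover have "real (card {i. t j \<le> w i}) \<le> x j" using lev(4)[of j] j by simp
      ultimately have "real (card (?F \<inter> {i. t j \<le> w i})) \<le> x j" by linarith
      then show "t (Suc j) powr \<beta> * real (card (?F \<inter> {i. t j \<le> w i})) \<le> t (Suc j) powr \<beta> * x j"
        by (intro mult_left_mono) auto
    qed
    finally show ?thesis unfolding WA'_def by (simp add: mult.commute)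
  qed
  have WA0: "0 \<le> WA" unfolding WA_def using vU by (intro sum_nonneg) auto
  have Wl': "0 < W' - real N * U" using Wl unfolding W'_def .
  have Wl0: "0 < W0 - real N * U" using Wl' W0W' by linarith
  have KK: "K_pmf \<gamma> \<beta> w N = bind_pmf (iid_list (weighted_pmf {..<L} v) N) (\<lambda>J. draw_wo v ({..<L} - set J) (N - card (set J)))"
    by (simp add: K_pmf_def v_def L_def Let_def)
  have hit: "measure_pmf.prob (K_pmf \<gamma> \<beta> w N) {K. K \<inter> A \<noteq> {}}
      \<le> real N * real N * (U / W0) * WA / (W0 - real N * U)"
    unfolding KK W0_def WA_def
    by (rule K_bound) (use vU U0 Wl0 W0_def in auto)
  also have "\<dots> \<le> real N * real N * (U / W') * WA' / (W' - real N * U)"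
    by (rule bound_mono) (use Wl' W0W' WA0 WAWA' U0 in auto)
  finally have hit2: "measure_pmf.prob (K_pmf \<gamma> \<beta> w N) {K. K \<inter> A \<noteq> {}} \<le> real N * real N * (U / W') * WA' / (W' - real N * U)" .
  have "measure_pmf.prob (K_pmf \<gamma> \<beta> w N) {K. card {k\<in>K. w k \<ge> t 0} = 0}
     = measure_pmf.prob (K_pmf \<gamma> \<beta> w N) {K. \<forall>k\<in>K. w k < t 0}" by (rule target_eq)
  also have "{K. \<forall>k\<in>K. w k < t 0} = UNIV - {K. K \<inter> A \<noteq> {}}" unfolding A_def by (auto simp: not_le)
  also have "measure_pmf.prob (K_pmf \<gamma> \<beta> w N) (UNIV - {K. K \<inter> A \<noteq> {}}) = 1 - measure_pmf.prob (K_pmf \<gamma> \<beta> w N) {K. K \<inter> A \<noteq> {}}"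
    using measure_pmf.prob_compl[of "{K. K \<inter> A \<noteq> {}}" "K_pmf \<gamma> \<beta> w N"] by simp
  finally show ?thesis using hit2 unfolding W'_def WA'_def by linarith
qed




lemma level_term:
  fixes n e a \<beta> :: real and j :: nat
  assumes n: "1 \<le> n" and e: "0 \<le> e" and \<beta>: "\<beta> \<le> 1"
  shows "(n powr e / n powr (- a + real j * e)) * (n powr (- a + real (Suc j) * e)) powr \<beta>
         \<le> n powr (e + e * \<beta> + (1 - \<beta>) * a)"
proof -
  have n0: "0 < n" using n by simp
  have 1: "(n powr (- a + real (Suc j) * e)) powr \<beta> = n powr ((- a + real (Suc j) * e) * \<beta>)"
    by (rule powr_powr)
  have 2: "n powr e / n powr (- a + real j * e) = n powr (e - (- a + real j * e))"
    by (rule powr_diff[symmetric])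
  have "(n powr e / n powr (- a + real j * e)) * (n powr (- a + real (Suc j) * e)) powr \<beta>
      = n powr (e - (- a + real j * e) + (- a + real (Suc j) * e) * \<beta>)"
    unfolding 1 2 by (rule powr_add[symmetric])
  also have "e - (- a + real j * e) + (- a + real (Suc j) * e) * \<beta> = e + e * \<beta> + (1 - \<beta>) * a - (1 - \<beta>) * (real j * e)"
    by (simp add: algebra_simps)
  also have "n powr \<dots> \<le> n powr (e + e * \<beta> + (1 - \<beta>) * a)"
    using n e \<beta> by (intro powr_mono) (auto intro!: mult_nonneg_nonneg)
  finally show ?thesis .
qed

lemma arith_bound:
  fixes \<gamma> \<beta> n e \<alpha> :: real and J m3 :: nat
  defines "s \<equiv> 1 - \<beta>"
  assumes \<beta>: "0 < \<beta>" "\<beta> < 1" and e: "e = (\<gamma> * s - 1) / 12" "0 < e" and \<alpha>: "\<alpha> = \<gamma> - 1 / s"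
    and n: "1 \<le> n" and m3: "n powr \<gamma> / exp 2 \<le> real m3"
    and ev: "2 * exp 2 * n powr (1 + e) \<le> n powr (\<gamma> * s)"
  shows "0 < real m3 * (n powr (- \<gamma>)) powr \<beta> - n * n powr e"
    and "n * n * (n powr e / (real m3 * (n powr (- \<gamma>)) powr \<beta>)) *
           (\<Sum>j<J. (n powr e / n powr (- (\<alpha> + e) + real j * e)) * (n powr (- (\<alpha> + e) + real (Suc j) * e)) powr \<beta>)
         / (real m3 * (n powr (- \<gamma>)) powr \<beta> - n * n powr e)
       \<le> 2 * real J * exp 4 * n powr (- 9 * e)"
proof -
  have n0: "0 < n" using n by simp
  have s0: "0 < s" using \<beta> by (simp add: s_def)
  define W where "W = real m3 * (n powr (- \<gamma>)) powr \<beta>"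
  define E1 where "E1 = e + e * \<beta> + (1 - \<beta>) * (\<alpha> + e)"
  have Wlow: "n powr (\<gamma> * s) / exp 2 \<le> W"
  proof -
    have "n powr (\<gamma> * s) / exp 2 = (n powr \<gamma> / exp 2) * (n powr (- \<gamma>)) powr \<beta>"
      using n0 by (simp add: powr_powr s_def algebra_simps powr_add[symmetric])
    also have "\<dots> \<le> W" unfolding W_def using m3 by (intro mult_right_mono) auto
    finally show ?thesis .
  qed
  have nU: "n * n powr e = n powr (1 + e)" using n0 by (simp add: powr_add)
  have e2: "0 < exp (2::real)" by simp
  have Wpos: "0 < n powr (\<gamma> * s) / exp 2" using n0 by simp
  have half: "n * n powr e \<le> W / 2"
  proof -
    have "n powr (1 + e) \<le> n powr (\<gamma> * s) / (2 * exp 2)" using ev e2 by (simp add: field_simps)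
    also have "\<dots> \<le> W / 2" using Wlow by (simp add: field_simps)
    finally show ?thesis using nU by simp
  qed
  have Wp: "0 < W" using Wlow Wpos by linarith
  show "0 < real m3 * (n powr (- \<gamma>)) powr \<beta> - n * n powr e" using half Wp unfolding W_def by linarith
  define S where "S = (\<Sum>j<J. (n powr e / n powr (- (\<alpha> + e) + real j * e)) * (n powr (- (\<alpha> + e) + real (Suc j) * e)) powr \<beta>)"
  have S: "S \<le> real J * n powr E1"
  proof -
    have "S \<le> (\<Sum>j<J. n powr E1)" unfolding S_def E1_def
      by (rule sum_mono, rule level_term) (use n e \<beta> in auto)
    then show ?thesis by simp
  qed
  have S0: "0 \<le> S" unfolding S_def by (intro sum_nonneg) simp
  have "n * n * (n powr e / W) * S / (W - n * n powr e) \<le> n * n * (n powr e / W) * S / (W / 2)"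
    using half Wp S0 n0 by (intro divide_left_mono mult_pos_pos) (auto intro!: mult_nonneg_nonneg)
  also have "\<dots> = 2 * (n * n * n powr e * S) / (W * W)" using Wp by (simp add: field_simps)
  also have "\<dots> \<le> 2 * (n * n * n powr e * (real J * n powr E1)) / ((n powr (\<gamma> * s) / exp 2) * (n powr (\<gamma> * s) / exp 2))"
    using S S0 Wlow Wpos n0 Wp by (intro frac_le mult_left_mono mult_mono) (auto intro!: mult_nonneg_nonneg)
  also have "\<dots> = 2 * real J * (exp 2 * exp 2) * (n powr 2 * n powr e * n powr E1 / (n powr (\<gamma> * s) * n powr (\<gamma> * s)))"
    using n0 by (simp add: field_simps powr_numeral power2_eq_square)
  also have "exp 2 * exp 2 = exp (4::real)" by (simp add: exp_add[symmetric])
  also have "n powr 2 * n powr e * n powr E1 / (n powr (\<gamma> * s) * n powr (\<gamma> * s)) = n powr (2 + e + E1 - 2 * (\<gamma> * s))"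
  proof -
    have "n powr 2 * n powr e * n powr E1 = n powr (2 + e + E1)" by (simp only: powr_add)
    moreover have "n powr (\<gamma> * s) * n powr (\<gamma> * s) = n powr (2 * (\<gamma> * s))" by (simp only: powr_add[symmetric] mult_2)
    ultimately show ?thesis by (simp only: powr_diff)
  qed
  also have "2 + e + E1 - 2 * (\<gamma> * s) = - 9 * e"
  proof -
    have "(1 - \<beta>) * \<alpha> = \<gamma> * s - 1" unfolding \<alpha> s_def using s0 s_def by (simp add: field_simps)
    then have "E1 = 2 * e + (\<gamma> * s - 1)" unfolding E1_def by (simp add: algebra_simps)
    moreover have "\<gamma> * s = 1 + 12 * e" using e(1) by simp
    ultimately show ?thesis by linarith
  qed
  finally show "n * n * (n powr e / (real m3 * (n powr (- \<gamma>)) powr \<beta>)) *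
           (\<Sum>j<J. (n powr e / n powr (- (\<alpha> + e) + real j * e)) * (n powr (- (\<alpha> + e) + real (Suc j) * e)) powr \<beta>)
         / (real m3 * (n powr (- \<gamma>)) powr \<beta> - n * n powr e)
       \<le> 2 * real J * exp 4 * n powr (- 9 * e)" unfolding W_def S_def by simp
qed


lemma poisson_atoms_prob: "poisson_atoms M w \<Longrightarrow> prob_space M"
  unfolding poisson_atoms_def by (elim conjE)

lemma fail_upper:
  assumes PA: "poisson_atoms M w" and t: "0 < t" and K: "exp 1 \<le> K" and y: "(1 / t) * K \<le> y"
  shows "measure M {\<omega>\<in>space M. nat \<lceil>y\<rceil> \<le> atom_count (w \<omega>) {t..}} \<le> exp 1 / K"
proof -
  define l where "l = 1 / t"
  define m where "m = nat \<lceil>y\<rceil>"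
  have l0: "0 < l" using t by (simp add: l_def)
  have K0: "0 < K" using K exp_gt_zero[of 1] by linarith
  have y0: "0 < y" using y l0 K0 unfolding l_def[symmetric] by (smt (verit) mult_pos_pos)
  have my: "y \<le> real m" unfolding m_def by linarith
  have m0: "0 < m" using y0 unfolding m_def by simp
  have "measure M {\<omega>\<in>space M. m \<le> atom_count (w \<omega>) {t..}} \<le> (exp 1 * l / real m) ^ m"
    by (rule poisson_upper[OF poisson_atoms_prob[OF PA] l0 _ m0])
       (use poisson_ge(2)[OF PA t] in \<open>simp add: l_def\<close>)
  also have "\<dots> \<le> (exp 1 * l / real m) ^ 1"
  proof (rule power_decreasing)
    have "exp 1 * l / real m \<le> exp 1 * l / y" using my y0 l0 by (intro divide_left_mono) auto
    also have "\<dots> \<le> exp 1 * l / (l * K)" using y l0 K0 y0 unfolding l_def[symmetric]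
      by (intro divide_left_mono) (auto simp: mult.commute intro: mult_pos_pos)
    also have "\<dots> = exp 1 / K" using l0 by simp
    also have "\<dots> \<le> 1" using K K0 by simp
    finally show "exp 1 * l / real m \<le> 1" .
  qed (use m0 l0 in auto)
  also have "\<dots> \<le> exp 1 / K"
  proof -
    have "exp 1 * l / real m \<le> exp 1 * l / y" using my y0 l0 by (intro divide_left_mono) auto
    also have "\<dots> \<le> exp 1 * l / (l * K)" using y l0 K0 y0 unfolding l_def[symmetric]
      by (intro divide_left_mono) (auto simp: mult.commute intro: mult_pos_pos)
    also have "\<dots> = exp 1 / K" using l0 by simp
    finally show ?thesis by simp
  qed
  finally show ?thesis unfolding m_def .
qed

lemma exp2_ge4: "4 \<le> exp (2::real)"
proof -
  have "2 \<le> exp (1::real)" using exp_ge_add_one_self[of 1] by simp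
  then have "2 * 2 \<le> exp (1::real) * exp 1" by (intro mult_mono) auto
  then show ?thesis by (simp add: exp_add[symmetric])
qed

lemma fail_lower:
  assumes PA: "poisson_atoms M w" and t: "0 < t" and l2: "2 \<le> 1 / t"
  shows "measure M {\<omega>\<in>space M. atom_count (w \<omega>) {t..} < nat \<lceil>(1 / t) / exp 2\<rceil>}
     \<le> (1 / t + 1) * exp (3 - (1 / t) / 4)"
proof -
  define l where "l = 1 / t"
  define m where "m = nat \<lceil>l / exp 2\<rceil>"
  have l0: "0 < l" using t by (simp add: l_def)
  have e4: "4 \<le> exp (2::real)" by (rule exp2_ge4)
  have e0: "0 < exp (2::real)" by simp
  have ml: "l / exp 2 \<le> real m" unfolding m_def by linarith
  have mu: "real m \<le> l / exp 2 + 1"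
  proof -
    have "0 \<le> l / exp 2" using l0 by simp
    then have "0 \<le> \<lceil>l / exp 2\<rceil>" by linarith
    then have "real m = of_int \<lceil>l / exp 2\<rceil>" unfolding m_def by simp
    also have "\<dots> \<le> l / exp 2 + 1" by (rule of_int_ceiling_le_add_one)
    finally show ?thesis .
  qed
  have l4: "l / exp 2 \<le> l / 4" using l0 e4 by (intro divide_left_mono) auto
  have m0: "0 < m" using l0 unfolding m_def by simp
  have mlt: "real m \<le> l" using mu l4 l2 unfolding l_def[symmetric] by linarith
  have "measure M {\<omega>\<in>space M. atom_count (w \<omega>) {t..} < m} \<le> real m * (exp 1 * l / real m) ^ m * exp (- l)"
    by (rule poisson_lower[OF poisson_atoms_prob[OF PA] l0 _ m0 mlt])
       (use poisson_ge(2)[OF PA t] in \<open>simp add: l_def\<close>)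
  also have "\<dots> \<le> real m * (exp 1 * exp 2) ^ m * exp (- l)"
  proof -
    have "l / real m \<le> exp 2" using ml m0 e0 by (simp add: field_simps)
    then have "exp 1 * l / real m \<le> exp 1 * exp 2" by (simp add: mult_left_mono times_divide_eq_right[symmetric] del: times_divide_eq_right)
    then show ?thesis using l0 m0 by (intro mult_right_mono mult_left_mono power_mono) auto
  qed
  also have "(exp 1 * exp 2) ^ m = exp (3 * real m)"
    by (simp add: exp_add[symmetric] exp_of_nat_mult[symmetric] mult.commute)
  also have "real m * exp (3 * real m) * exp (- l) = real m * exp (3 * real m - l)"
    by (simp add: exp_diff exp_minus field_simps)
  also have "\<dots> \<le> (l + 1) * exp (3 - l / 4)"
  proof (rule mult_mono)
    show "real m \<le> l + 1" using mlt by simp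
    show "exp (3 * real m - l) \<le> exp (3 - l / 4)" using mu l4 by simp
  qed (use l0 in auto)
  finally show ?thesis unfolding m_def l_def .
qed




lemma powr_inf: "0 < c \<Longrightarrow> filterlim (\<lambda>N::nat. real N powr c) at_top sequentially"
proof -
  assume c: "0 < c"
  have "((\<lambda>N::nat. real N powr (-c)) \<longlongrightarrow> 0) sequentially"
    by (rule tendsto_neg_powr) (use c filterlim_real_sequentially in auto)
  moreover have "eventually (\<lambda>N::nat. 0 < real N powr (-c)) sequentially"
    using eventually_gt_at_top[of "0::nat"] by eventually_elim simp
  ultimately have "filterlim (\<lambda>N. inverse (real N powr (-c))) at_top sequentially"
    by (rule filterlim_inverse_at_top)
  moreover have "inverse (real N powr (-c)) = real N powr c" for N
    by (simp add: powr_minus)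
  ultimately show ?thesis by simp
qed

lemma powr_zero_lim: "0 < c \<Longrightarrow> ((\<lambda>N::nat. real N powr (-c)) \<longlongrightarrow> 0) sequentially"
  by (rule tendsto_neg_powr) (use filterlim_real_sequentially in auto)

lemma exp_tail:
  fixes z :: "'a \<Rightarrow> real"
  assumes z: "filterlim z at_top F"
  shows "((\<lambda>x. (4 * z x + 1) * exp (3 - z x)) \<longlongrightarrow> 0) F"
proof -
  have a: "((\<lambda>x. z x / exp (z x)) \<longlongrightarrow> 0) F"
    using filterlim_compose[OF tendsto_power_div_exp_0[of 1] z] by simp
  have b: "((\<lambda>x. inverse (exp (z x))) \<longlongrightarrow> 0) F"
    by (rule tendsto_inverse_0_at_top) (rule filterlim_compose[OF exp_at_top z])
  have "((\<lambda>x. exp 3 * (4 * (z x / exp (z x)) + inverse (exp (z x)))) \<longlongrightarrow> exp 3 * (4 * 0 + 0)) F"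
    by (intro tendsto_intros a b)
  moreover have "exp 3 * (4 * (z x / exp (z x)) + inverse (exp (z x))) = (4 * z x + 1) * exp (3 - z x)" for x
    by (simp add: exp_diff field_simps)
  ultimately show ?thesis by simp
qed

lemma less_nat_ceiling: "n < nat \<lceil>x\<rceil> \<Longrightarrow> real n < x"
  by (simp add: zless_nat_eq_int_zless less_ceiling_iff)

lemma count_sets:
  assumes PA: "poisson_atoms M w" and t: "0 < t"
  shows "{\<omega>\<in>space M. atom_count (w \<omega>) {t..} < m} \<in> sets M"
    and "{\<omega>\<in>space M. m \<le> atom_count (w \<omega>) {t..}} \<in> sets M"
proof -
  have l: "0 < 1 / t" using t by simp
  show A: "{\<omega>\<in>space M. atom_count (w \<omega>) {t..} < m} \<in> sets M"
    by (rule poisson_tail(4)[OF poisson_atoms_prob[OF PA] l poisson_ge(2)[OF PA t]])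
  have "{\<omega>\<in>space M. m \<le> atom_count (w \<omega>) {t..}} = space M - {\<omega>\<in>space M. atom_count (w \<omega>) {t..} < m}"
    by auto
  then show "{\<omega>\<in>space M. m \<le> atom_count (w \<omega>) {t..}} \<in> sets M" using A by auto
qed

lemma poisson_atoms_meas: "poisson_atoms M w \<Longrightarrow> (\<lambda>\<omega>. w \<omega> i) \<in> borel_measurable M"
  unfolding poisson_atoms_def apply (elim conjE) by (erule allE)

lemma poisson_atoms_AE: "poisson_atoms M w \<Longrightarrow> AE \<omega> in M. (\<forall>i. 0 < w \<omega> i) \<and> (\<forall>i. w \<omega> (Suc i) < w \<omega> i)"
  unfolding poisson_atoms_def apply (elim conjE) by assumption




theorem lemma5p5:
  fixes \<gamma> \<beta> :: real and M :: "'a measure" and w :: "'a \<Rightarrow> nat \<Rightarrow> real"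
  assumes "1 < \<gamma>" and "0 < \<beta>" and "\<beta> < 1" and "\<beta> < 1 - 1 / \<gamma>"
    and "poisson_atoms M w"
  shows "let \<alpha> = \<gamma> - 1 / (1 - \<beta>) in
    \<exists>\<delta>>0. (\<lambda>N::nat. \<integral>\<omega>. measure_pmf.prob (K_pmf \<gamma> \<beta> (w \<omega>) N)
              {K. card {k\<in>K. w \<omega> k \<ge> real N powr (- (\<alpha> + \<delta>))} = 0} \<partial>M)
          \<longlonglongrightarrow> 1"
proof -
  note PA = assms(5)
  have ps: "prob_space M" by (rule poisson_atoms_prob[OF PA])
  interpret prob_space M by (rule ps)
  have wm: "\<And>i. (\<lambda>\<omega>. w \<omega> i) \<in> borel_measurable M" by (rule poisson_atoms_meas[OF PA])
  define s where "s = 1 - \<beta>"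
  have s0: "0 < s" using assms by (simp add: s_def)
  have g0: "0 < \<gamma>" using assms by simp
  have "1 / \<gamma> < s" using assms by (simp add: s_def)
  then have gs: "1 < \<gamma> * s" using g0 by (simp add: field_simps)
  define e where "e = (\<gamma> * s - 1) / 12"
  have e0: "0 < e" using gs by (simp add: e_def)
  define \<alpha> where "\<alpha> = \<gamma> - 1 / s"
  define J where "J = nat \<lceil>(\<alpha> + 2 * e) / e\<rceil>"
  define t where "t N j = real N powr (- (\<alpha> + e) + real j * e)" for N :: nat and j :: nat
  define U where "U N = real N powr e" for N :: nat
  define b where "b N = real N powr (- \<gamma>)" for N :: nat
  define m3 where "m3 N = nat \<lceil>(1 / b N) / exp 2\<rceil>" for N :: nat
  define xx where "xx N j = U N / t N j" for N :: nat and j :: nat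
  define g where "g N \<omega> = measure_pmf.prob (K_pmf \<gamma> \<beta> (w \<omega>) N)
              {K. card {k\<in>K. w \<omega> k \<ge> real N powr (- (\<alpha> + e))} = 0}" for N \<omega>
  define Bnd where "Bnd N = 2 * real J * exp 4 * real N powr (- (9 * e))" for N :: nat
  define fb where "fb N = exp 1 / U N * (1 + real J) + (1 / b N + 1) * exp (3 - (1 / b N) / 4)" for N :: nat
  define Q where "Q \<omega> \<longleftrightarrow> ((\<forall>i. 0 < w \<omega> i) \<and> (\<forall>i. w \<omega> (Suc i) < w \<omega> i)) \<and>
      (\<forall>N::nat. 1 \<le> N \<longrightarrow> finite {i. w \<omega> i \<in> {U N..}} \<and> (\<forall>j::nat. finite {i. w \<omega> i \<in> {t N j..}})
          \<and> finite {i. w \<omega> i \<in> {b N..}})" for \<omega>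
  have binv: "1 / b N = real N powr \<gamma>" for N by (simp add: b_def powr_minus divide_inverse)
  have pos_t: "0 < t N j" if "1 \<le> N" for N j using that by (simp add: t_def)
  have pos_U: "0 < U N" if "1 \<le> N" for N using that by (simp add: U_def)
  have pos_b: "0 < b N" if "1 \<le> N" for N using that by (simp add: b_def)
  have AEQ: "AE \<omega> in M. Q \<omega>"
  proof -
    have "AE \<omega> in M. \<forall>N::nat. 1 \<le> N \<longrightarrow> finite {i. w \<omega> i \<in> {U N..}} \<and> (\<forall>j::nat. finite {i. w \<omega> i \<in> {t N j..}})
          \<and> finite {i. w \<omega> i \<in> {b N..}}"
    proof (subst AE_all_countable, intro allI)
      fix N :: nat
      show "AE \<omega> in M. 1 \<le> N \<longrightarrow> finite {i. w \<omega> i \<in> {U N..}} \<and> (\<forall>j::nat. finite {i. w \<omega> i \<in> {t N j..}})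
          \<and> finite {i. w \<omega> i \<in> {b N..}}"
      proof (cases "1 \<le> N")
        case True
        have "AE \<omega> in M. \<forall>j::nat. finite {i. w \<omega> i \<in> {t N j..}}"
          by (subst AE_all_countable) (intro allI poisson_ge(1)[OF PA pos_t[OF True]])
        then show ?thesis using poisson_ge(1)[OF PA pos_U[OF True]] poisson_ge(1)[OF PA pos_b[OF True]]
          by eventually_elim auto
      qed simp
    qed
    then show ?thesis using poisson_atoms_AE[OF PA] unfolding Q_def by eventually_elim auto
  qed
  from AE_E[OF AEQ] obtain N0 where N0: "{\<omega> \<in> space M. \<not> Q \<omega>} \<subseteq> N0" "emeasure M N0 = 0" "N0 \<in> sets M" .
  define G where "G N = {\<omega>\<in>space M. \<omega> \<notin> N0 \<and> atom_count (w \<omega>) {U N..} < nat \<lceil>(1 / U N) * U N\<rceil>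
      \<and> (\<forall>j\<in>{..<J}. atom_count (w \<omega>) {t N j..} < nat \<lceil>xx N j\<rceil>) \<and> \<not> atom_count (w \<omega>) {b N..} < m3 N}" for N
  define Ev where "Ev N \<longleftrightarrow> 1 \<le> N \<and> exp 1 \<le> U N \<and> 2 \<le> 1 / b N \<and> 2 * exp 2 * real N powr (1 + e) \<le> real N powr (\<gamma> * s)
      \<and> Bnd N \<le> 1" for N :: nat

  have det: "1 - Bnd N \<le> g N \<omega>" if Ev: "Ev N" and \<omega>: "\<omega> \<in> G N" for N \<omega>
  proof -
    have N1: "1 \<le> N" and eU: "exp 1 \<le> U N" and b2: "2 \<le> 1 / b N"
      and ev: "2 * exp 2 * real N powr (1 + e) \<le> real N powr (\<gamma> * s)" using Ev by (auto simp: Ev_def)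
    have \<omega>s: "\<omega> \<in> space M" and \<omega>N0: "\<omega> \<notin> N0"
      and c1: "atom_count (w \<omega>) {U N..} < nat \<lceil>(1 / U N) * U N\<rceil>"
      and c2: "\<And>j. j < J \<Longrightarrow> atom_count (w \<omega>) {t N j..} < nat \<lceil>xx N j\<rceil>"
      and c3: "\<not> atom_count (w \<omega>) {b N..} < m3 N" using \<omega> unfolding G_def by auto
    have Q\<omega>: "Q \<omega>" using N0(1) \<omega>s \<omega>N0 by auto
    then have pos: "\<And>i. 0 < w \<omega> i" and dec: "\<And>i. w \<omega> (Suc i) < w \<omega> i"
      and finU: "finite {i. w \<omega> i \<in> {U N..}}" and fint: "\<And>j. finite {i. w \<omega> i \<in> {t N j..}}"
      and finb: "finite {i. w \<omega> i \<in> {b N..}}" unfolding Q_def using N1 by auto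
    have n1: "1 \<le> real N" using N1 by simp
    have U1: "1 \<le> U N" unfolding U_def using n1 e0 by (simp add: ge_one_powr_ge_zero)
    have Ub: "w \<omega> i < U N" for i
    proof -
      have "nat \<lceil>(1 / U N) * U N\<rceil> = 1" using pos_U[OF N1] by simp
      then have "card {i. w \<omega> i \<in> {U N..}} = 0" using c1 unfolding atom_count_def by simp
      then have "{i. w \<omega> i \<in> {U N..}} = {}" using finU by simp
      then show ?thesis by (auto simp: not_le)
    qed
    have binv': "1 / b N = real N powr \<gamma>" by (rule binv)
    have m3ge: "real N powr \<gamma> / exp 2 \<le> real (m3 N)"
      unfolding m3_def binv' by (rule real_nat_ceiling_ge)
    have m3L: "m3 N \<le> num_slots \<gamma> N"
    proof -
      have "real N powr \<gamma> * 1 \<le> real N powr \<gamma> * exp 2" using exp2_ge4 by (intro mult_left_mono) auto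
      then have "real N powr \<gamma> / exp 2 \<le> real N powr \<gamma>" by (simp add: divide_le_eq)
      then show ?thesis unfolding m3_def binv' num_slots_def by (intro nat_mono ceiling_mono)
    qed
    have m3c: "m3 N \<le> card {i. b N \<le> w \<omega> i}" using c3 unfolding atom_count_def by simp
    have finb': "finite {i. b N \<le> w \<omega> i}" using finb by simp
    have t0: "0 < t N 0" by (rule pos_t[OF N1])
    have tmono: "t N 0 \<le> t N j" for j unfolding t_def using n1 e0 by (intro powr_mono) auto
    have Jge: "\<alpha> + 2 * e \<le> real J * e"
    proof -
      have "(\<alpha> + 2 * e) / e \<le> real J" unfolding J_def by (rule real_nat_ceiling_ge)
      then show ?thesis using e0 by (simp add: divide_le_eq)
    qed
    have UtJ: "U N \<le> t N J" unfolding U_def t_def using n1 Jge by (intro powr_mono) auto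
    have lev: "finite {i. t N j \<le> w \<omega> i} \<and> real (card {i. t N j \<le> w \<omega> i}) \<le> xx N j" if j: "j < J" for j
    proof -
      have "real (card {i. t N j \<le> w \<omega> i}) < xx N j"
        using less_nat_ceiling[OF c2[OF j]] unfolding atom_count_def by simp
      then show ?thesis using fint[of j] by simp
    qed
    have e_eq: "e = (\<gamma> * (1 - \<beta>) - 1) / 12" by (simp add: e_def s_def)
    have \<alpha>_eq: "\<alpha> = \<gamma> - 1 / (1 - \<beta>)" by (simp add: \<alpha>_def s_def)
    have ev': "2 * exp 2 * real N powr (1 + e) \<le> real N powr (\<gamma> * (1 - \<beta>))" using ev by (simp add: s_def)
    note AB1 = arith_bound(1)[where \<beta>=\<beta> and e=e and \<gamma>=\<gamma> and \<alpha>=\<alpha> and n="real N" and ?m3.0="m3 N",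
        OF assms(2) assms(3) e_eq e0 \<alpha>_eq n1 m3ge ev']
    note AB2 = arith_bound(2)[where \<beta>=\<beta> and e=e and \<gamma>=\<gamma> and \<alpha>=\<alpha> and n="real N" and ?m3.0="m3 N" and J=J,
        OF assms(2) assms(3) e_eq e0 \<alpha>_eq n1 m3ge ev']
    have gb: "1 - real N * real N * (U N / (real (m3 N) * b N powr \<beta>)) * (\<Sum>j<J. xx N j * t N (Suc j) powr \<beta>)
            / (real (m3 N) * b N powr \<beta> - real N * U N)
       \<le> measure_pmf.prob (K_pmf \<gamma> \<beta> (w \<omega>) N) {K. card {k\<in>K. w \<omega> k \<ge> t N 0} = 0}"
      by (rule good_bound[where J=J]) (use pos dec assms(2,3) U1 Ub pos_b[OF N1] finb' m3c m3L t0 tmono UtJ lev AB1 in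
            \<open>auto simp: U_def b_def\<close>)
    have "real N * real N * (U N / (real (m3 N) * b N powr \<beta>)) * (\<Sum>j<J. xx N j * t N (Suc j) powr \<beta>)
            / (real (m3 N) * b N powr \<beta> - real N * U N) \<le> Bnd N"
      using AB2 unfolding U_def b_def xx_def t_def Bnd_def by simp
    moreover have "t N 0 = real N powr (- (\<alpha> + e))" by (simp add: t_def)
    ultimately show ?thesis using gb unfolding g_def by simp
  qed

  have Gsets: "G N \<in> sets M" if N1: "1 \<le> N" for N
  proof -
    have a: "{\<omega>\<in>space M. \<omega> \<notin> N0} \<in> sets M"
    proof -
      have "{\<omega>\<in>space M. \<omega> \<notin> N0} = space M - N0" by auto
      then show ?thesis using N0(3) by auto
    qed
    have b1: "{\<omega>\<in>space M. atom_count (w \<omega>) {U N..} < nat \<lceil>(1 / U N) * U N\<rceil>} \<in> sets M"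
      by (rule count_sets(1)[OF PA pos_U[OF N1]])
    have b2: "{\<omega>\<in>space M. \<forall>j\<in>{..<J}. atom_count (w \<omega>) {t N j..} < nat \<lceil>xx N j\<rceil>} \<in> sets M"
      by (rule sets.sets_Collect_finite_All) (use count_sets(1)[OF PA pos_t[OF N1]] in auto)
    have b3: "{\<omega>\<in>space M. \<not> atom_count (w \<omega>) {b N..} < m3 N} \<in> sets M"
      by (rule sets.sets_Collect_neg) (rule count_sets(1)[OF PA pos_b[OF N1]])
    have "G N = {\<omega>\<in>space M. \<omega> \<notin> N0} \<inter> {\<omega>\<in>space M. atom_count (w \<omega>) {U N..} < nat \<lceil>(1 / U N) * U N\<rceil>}
       \<inter> {\<omega>\<in>space M. \<forall>j\<in>{..<J}. atom_count (w \<omega>) {t N j..} < nat \<lceil>xx N j\<rceil>}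
       \<inter> {\<omega>\<in>space M. \<not> atom_count (w \<omega>) {b N..} < m3 N}" unfolding G_def by auto
    then show ?thesis using a b1 b2 b3 by auto
  qed
  have Gmeas: "1 - fb N \<le> measure M (G N)" if Ev: "Ev N" for N
  proof -
    have N1: "1 \<le> N" and eU: "exp 1 \<le> U N" and b2: "2 \<le> 1 / b N" using Ev by (auto simp: Ev_def)
    define F1 where "F1 = {\<omega>\<in>space M. nat \<lceil>(1 / U N) * U N\<rceil> \<le> atom_count (w \<omega>) {U N..}}"
    define F2 where "F2 j = {\<omega>\<in>space M. nat \<lceil>xx N j\<rceil> \<le> atom_count (w \<omega>) {t N j..}}" for j
    define F3 where "F3 = {\<omega>\<in>space M. atom_count (w \<omega>) {b N..} < m3 N}"
    have sF1: "F1 \<in> sets M" unfolding F1_def by (rule count_sets(2)[OF PA pos_U[OF N1]])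
    have sF2: "F2 j \<in> sets M" for j unfolding F2_def by (rule count_sets(2)[OF PA pos_t[OF N1]])
    have sF3: "F3 \<in> sets M" unfolding F3_def by (rule count_sets(1)[OF PA pos_b[OF N1]])
    have sUF2: "(\<Union>j\<in>{..<J}. F2 j) \<in> sets M" using sF2 by auto
    have mF1: "measure M F1 \<le> exp 1 / U N"
      unfolding F1_def by (rule fail_upper[OF PA pos_U[OF N1] eU]) simp
    have mF2: "measure M (F2 j) \<le> exp 1 / U N" for j
      unfolding F2_def xx_def by (rule fail_upper[OF PA pos_t[OF N1] eU]) simp
    have mF3: "measure M F3 \<le> (1 / b N + 1) * exp (3 - (1 / b N) / 4)"
      unfolding F3_def m3_def by (rule fail_lower[OF PA pos_b[OF N1] b2])
    have mUF2: "measure M (\<Union>j\<in>{..<J}. F2 j) \<le> real J * (exp 1 / U N)"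
    proof -
      have "measure M (\<Union>j\<in>{..<J}. F2 j) \<le> (\<Sum>j\<in>{..<J}. measure M (F2 j))"
        by (rule finite_measure_subadditive_finite) (use sF2 in auto)
      also have "\<dots> \<le> (\<Sum>j\<in>{..<J}. exp 1 / U N)" by (rule sum_mono) (rule mF2)
      finally show ?thesis by simp
    qed
    have mN0: "measure M N0 = 0" using N0(2) by (simp add: measure_def)
    have sub: "space M - G N \<subseteq> N0 \<union> (F1 \<union> ((\<Union>j\<in>{..<J}. F2 j) \<union> F3))"
      unfolding G_def F1_def F2_def F3_def by (auto simp: not_less)
    have "measure M (space M - G N) \<le> measure M (N0 \<union> (F1 \<union> ((\<Union>j\<in>{..<J}. F2 j) \<union> F3)))"
      by (rule finite_measure_mono[OF sub]) (use N0(3) sF1 sUF2 sF3 in auto)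
    also have "\<dots> \<le> measure M N0 + (measure M F1 + (measure M (\<Union>j\<in>{..<J}. F2 j) + measure M F3))"
    proof -
      have "measure M (N0 \<union> (F1 \<union> ((\<Union>j\<in>{..<J}. F2 j) \<union> F3))) \<le> measure M N0 + measure M (F1 \<union> ((\<Union>j\<in>{..<J}. F2 j) \<union> F3))"
        by (rule measure_Un_le) (use N0(3) sF1 sUF2 sF3 in auto)
      moreover have "measure M (F1 \<union> ((\<Union>j\<in>{..<J}. F2 j) \<union> F3)) \<le> measure M F1 + measure M ((\<Union>j\<in>{..<J}. F2 j) \<union> F3)"
        by (rule measure_Un_le) (use sF1 sUF2 sF3 in auto)
      moreover have "measure M ((\<Union>j\<in>{..<J}. F2 j) \<union> F3) \<le> measure M (\<Union>j\<in>{..<J}. F2 j) + measure M F3"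
        by (rule measure_Un_le) (use sUF2 sF3 in auto)
      ultimately show ?thesis by linarith
    qed
    also have "\<dots> \<le> fb N"
    proof -
      have "fb N = exp 1 / U N * 1 + exp 1 / U N * real J + (1 / b N + 1) * exp (3 - (1 / b N) / 4)"
        unfolding fb_def by (simp only: distrib_left)
      then show ?thesis using mN0 mF1 mUF2 mF3 by (simp add: mult.commute)
    qed
    finally have "measure M (space M - G N) \<le> fb N" .
    moreover have "measure M (space M - G N) = 1 - measure M (G N)" by (rule prob_compl[OF Gsets[OF N1]])
    ultimately show ?thesis by linarith
  qed

  have limB: "Bnd \<longlonglongrightarrow> 0"
  proof -
    have "(\<lambda>N. real N powr (- (9 * e))) \<longlonglongrightarrow> 0" by (rule powr_zero_lim) (use e0 in simp)
    then have "(\<lambda>N. 2 * real J * exp 4 * real N powr (- (9 * e))) \<longlonglongrightarrow> 2 * real J * exp 4 * 0"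
      by (intro tendsto_intros)
    then show ?thesis by (simp add: Bnd_def[abs_def])
  qed
  have limf: "fb \<longlonglongrightarrow> 0"
  proof -
    have Uinv: "exp 1 / U N * (1 + real J) = exp 1 * (1 + real J) * real N powr (- e)" for N
      by (simp add: U_def powr_minus divide_inverse)
    have l1: "(\<lambda>N. exp 1 * (1 + real J) * real N powr (- e)) \<longlonglongrightarrow> exp 1 * (1 + real J) * 0"
      by (intro tendsto_intros powr_zero_lim e0)
    have zlim: "filterlim (\<lambda>N. (1 / 4) * real N powr \<gamma>) at_top sequentially"
      by (rule filterlim_tendsto_pos_mult_at_top[OF tendsto_const _ powr_inf[OF g0]]) simp
    have l2: "(\<lambda>N. (4 * ((1 / 4) * real N powr \<gamma>) + 1) * exp (3 - (1 / 4) * real N powr \<gamma>)) \<longlonglongrightarrow> 0"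
      by (rule exp_tail[OF zlim])
    have eq: "fb N = exp 1 * (1 + real J) * real N powr (- e) + (4 * ((1 / 4) * real N powr \<gamma>) + 1) * exp (3 - (1 / 4) * real N powr \<gamma>)" for N
      unfolding fb_def Uinv binv by simp
    show ?thesis unfolding eq using tendsto_add[OF l1 l2] by simp
  qed
  have evge: "eventually (\<lambda>N. c \<le> real N powr d) sequentially" if "0 < d" for c d
    using powr_inf[OF that] by (simp add: filterlim_at_top)
  have evEv: "eventually Ev sequentially"
  proof -
    have e1: "eventually (\<lambda>N::nat. 1 \<le> N) sequentially" by (rule eventually_ge_at_top)
    have e2: "eventually (\<lambda>N. exp 1 \<le> U N) sequentially" unfolding U_def by (rule evge[OF e0])
    have e3: "eventually (\<lambda>N. 2 \<le> 1 / b N) sequentially" unfolding binv by (rule evge[OF g0])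
    have e4: "eventually (\<lambda>N. 2 * exp 2 \<le> real N powr (11 * e)) sequentially" by (rule evge) (use e0 in simp)
    have e5: "eventually (\<lambda>N. Bnd N < 1) sequentially" using order_tendstoD(2)[OF limB] by simp
    show ?thesis using e1 e2 e3 e4 e5
    proof eventually_elim
      case (elim N)
      have "2 * exp 2 * real N powr (1 + e) \<le> real N powr (11 * e) * real N powr (1 + e)"
        using elim by (intro mult_right_mono) auto
      also have "\<dots> = real N powr (11 * e + (1 + e))" by (rule powr_add[symmetric])
      also have "11 * e + (1 + e) = \<gamma> * s" by (simp add: e_def field_simps)
      finally show ?case using elim unfolding Ev_def by auto
    qed
  qed

  have gm: "g N \<in> borel_measurable M" for N
    unfolding g_def by (rule measurable_integrand[OF wm])
  have g01: "0 \<le> g N \<omega> \<and> g N \<omega> \<le> 1" for N \<omega> unfolding g_def by (simp add: measure_pmf.prob_le_1)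
  have gint: "integrable M (g N)" for N
    by (rule integrable_const_bound[where B=1]) (use g01 gm in auto)
  have upper: "(\<integral>\<omega>. g N \<omega> \<partial>M) \<le> 1" for N
    by (rule integral_le_const) (use gint g01 in auto)
  have indint: "integrable M (indicator (G N) :: 'a \<Rightarrow> real)" if "1 \<le> N" for N
    by (rule integrable_const_bound[where B=1]) (use Gsets[OF that] in auto)
  have lower: "(1 - Bnd N) * (1 - fb N) \<le> (\<integral>\<omega>. g N \<omega> \<partial>M)" if Ev: "Ev N" for N
  proof -
    have B1: "0 \<le> 1 - Bnd N" using Ev by (simp add: Ev_def)
    have N1: "1 \<le> N" using Ev by (simp add: Ev_def)
    have "(1 - Bnd N) * (1 - fb N) \<le> (1 - Bnd N) * measure M (G N)"
      using Gmeas[OF Ev] B1 by (intro mult_left_mono) auto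
    also have "\<dots> = (\<integral>\<omega>. indicator (G N) \<omega> * (1 - Bnd N) \<partial>M)"
      using Gsets[OF N1] by simp
    also have "\<dots> \<le> (\<integral>\<omega>. g N \<omega> \<partial>M)"
    proof (rule integral_mono)
      show "integrable M (\<lambda>\<omega>. indicator (G N) \<omega> * (1 - Bnd N))"
        using indint[OF N1] by simp
      show "integrable M (g N)" by (rule gint)
      fix \<omega> assume "\<omega> \<in> space M"
      show "indicator (G N) \<omega> * (1 - Bnd N) \<le> g N \<omega>"
        using det[OF Ev, of \<omega>] g01[of N \<omega>] by (cases "\<omega> \<in> G N") auto
    qed
    finally show ?thesis .
  qed
  have lim1: "(\<lambda>N. (1 - Bnd N) * (1 - fb N)) \<longlonglongrightarrow> (1 - 0) * (1 - 0)"
    by (intro tendsto_intros limB limf)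
  have "(\<lambda>N. \<integral>\<omega>. g N \<omega> \<partial>M) \<longlonglongrightarrow> 1"
  proof (rule tendsto_sandwich[OF _ _ lim1[simplified] tendsto_const])
    show "eventually (\<lambda>N. (1 - Bnd N) * (1 - fb N) \<le> (\<integral>\<omega>. g N \<omega> \<partial>M)) sequentially"
      using evEv by eventually_elim (rule lower)
    show "eventually (\<lambda>N. (\<integral>\<omega>. g N \<omega> \<partial>M) \<le> 1) sequentially" using upper by simp
  qed
  moreover have "\<gamma> - 1 / (1 - \<beta>) = \<alpha>" by (simp add: \<alpha>_def s_def)
  ultimately show ?thesis unfolding Let_def g_def using e0 by auto
qed



end
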